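(* Suppose $D(1)<\infty$. Let $a\ge b\ge1$ be integers and let $C$ be one of $C(a,b)$, $C( *,a)$, $C_w$. Then for all integers $0\le i\le k<n$, $$\mathbb P(j\notin C,\ k+1\le j\le n\mid i\in C,\ k\in C)=\mathbb P(j\notin C,\ k+1\le j\le n\mid k\in C),$$ whenever the conditioning events have positive probability.
   Context: Let $p_0=1$, $q_0=0$, and for $k\ge1$ let $p_k,q_k>0$ with $p_k+q_k=1$. Let $X=(X_k)_{k\ge0}$ be the Markov chain on $\mathbb Z_+$ with $X_0=0$, $\mathbb P(X_{k+1}=n+1\mid X_k=n)=p_n$, $\mathbb P(X_{k+1}=n-1\mid X_k=n)=q_n$. Let $\rho_k=q_k/p_k$ ($k\ge1$) and $D(m)=1+\sum_{j=1}^{\infty}\rho_{m+1}\cdots\rho_{m+j}\in[1,\infty]$ for $m\ge0$. Let $\xi(x)=\sum_{k\ge0}1_{\{X_k=x\}}$ and $\xi(x,\uparrow)=\sum_{k\ge0}1_{\{X_k=x,X_{k+1}=x+1\}}$. Let $C(a,b)=\{x\in\mathbb Z_+:\xi(x)=a,\ \xi(x,\uparrow)=b\}$ and $C( *,a)=\{x\in\mathbb Z_+:\xi(x,\uparrow)=a\}$. A site $R$ is a weak cutpoint if for some $k$, $X_k=R$, $X_i\le R$ for $0\le i\le k-1$ and $X_i\ge R$ for all $i\ge k+1$; $C_w$ is the set of weak cutpoints. *)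

theory Defs
  imports "HOL-Probability.Probability"
begin

definition bd_trans :: "(nat \<Rightarrow> real) \<Rightarrow> nat \<Rightarrow> nat \<Rightarrow> real" where
  "bd_trans p n m = (if m = Suc n then p n else if 0 < n \<and> Suc m = n then 1 - p n else 0)"

definition rho :: "(nat \<Rightarrow> real) \<Rightarrow> nat \<Rightarrow> real" where
  "rho p k = (1 - p k) / p k"

definition Dfun :: "(nat \<Rightarrow> real) \<Rightarrow> nat \<Rightarrow> ennreal" where
  "Dfun p m = 1 + (\<Sum>j. ennreal (\<Prod>i\<in>{m+1..m+Suc j}. rho p i))"

definition xi :: "(nat \<Rightarrow> 'a \<Rightarrow> nat) \<Rightarrow> nat \<Rightarrow> 'a \<Rightarrow> enat" where
  "xi X x \<omega> = (if finite {k. X k \<omega> = x} then enat (card {k. X k \<omega> = x}) else \<infinity>)"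

definition xi_up :: "(nat \<Rightarrow> 'a \<Rightarrow> nat) \<Rightarrow> nat \<Rightarrow> 'a \<Rightarrow> enat" where
  "xi_up X x \<omega> = (if finite {k. X k \<omega> = x \<and> X (Suc k) \<omega> = Suc x}
      then enat (card {k. X k \<omega> = x \<and> X (Suc k) \<omega> = Suc x}) else \<infinity>)"

definition weak_cutpoint :: "(nat \<Rightarrow> 'a \<Rightarrow> nat) \<Rightarrow> nat \<Rightarrow> 'a \<Rightarrow> bool" where
  "weak_cutpoint X R \<omega> \<longleftrightarrow>
     (\<exists>k. X k \<omega> = R \<and> (\<forall>i<k. X i \<omega> \<le> R) \<and> (\<forall>i>k. R \<le> X i \<omega>))"

datatype cset_kind = Cab nat nat | Cstar nat | Cw

fun inC :: "cset_kind \<Rightarrow> (nat \<Rightarrow> 'a \<Rightarrow> nat) \<Rightarrow> nat \<Rightarrow> 'a \<Rightarrow> bool" where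
  "inC (Cab a b) X x \<omega> \<longleftrightarrow> xi X x \<omega> = enat a \<and> xi_up X x \<omega> = enat b"
| "inC (Cstar a) X x \<omega> \<longleftrightarrow> xi_up X x \<omega> = enat a"
| "inC Cw X x \<omega> \<longleftrightarrow> weak_cutpoint X x \<omega>"

definition is_bd_chain :: "'a measure \<Rightarrow> (nat \<Rightarrow> real) \<Rightarrow> (nat \<Rightarrow> 'a \<Rightarrow> nat) \<Rightarrow> bool" where
  "is_bd_chain M p X \<longleftrightarrow>
     prob_space M \<and>
     (\<forall>k. X k \<in> measurable M (count_space UNIV)) \<and>
     (\<forall>xs. xs \<noteq> [] \<longrightarrow>
        measure M {\<omega> \<in> space M. \<forall>i<length xs. X i \<omega> = xs ! i}
        = (if hd xs = 0 then 1 else 0) * (\<Prod>i<length xs - 1. bd_trans p (xs ! i) (xs ! Suc i)))"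

end

theory Submission
  imports Defs
begin

type_synonym stps = "(nat \<times> nat) list"

definition vstep :: "nat \<times> nat \<Rightarrow> bool" where
  "vstep e \<longleftrightarrow> snd e = Suc (fst e) \<or> (0 < fst e \<and> Suc (snd e) = fst e)"

fun cf :: "nat \<Rightarrow> stps \<Rightarrow> bool" where
  "cf c [] = True"
| "cf c (e#s) = (fst e = c \<and> cf (snd e) s)"

fun cfb :: "nat \<Rightarrow> nat \<Rightarrow> stps \<Rightarrow> bool" where
  "cfb L c [] = True"
| "cfb L c (e#s) = (fst e = c \<and> cfb L (if e = (L, Suc L) then L else snd e) s)"

fun cfa :: "nat \<Rightarrow> nat \<Rightarrow> stps \<Rightarrow> bool" where
  "cfa L c [] = True"
| "cfa L c (e#s) = (fst e = c \<and> cfa L (if e = (Suc L, L) then Suc L else snd e) s)"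

fun mrg :: "nat \<Rightarrow> bool \<Rightarrow> stps \<Rightarrow> stps \<Rightarrow> stps" where
  "mrg L True [] as = as"
| "mrg L True (e#bs) as = e # mrg L (e \<noteq> (L, Suc L)) bs as"
| "mrg L False bs [] = bs"
| "mrg L False bs (e#as) = e # mrg L (e = (Suc L, L)) bs as"

definition fb :: "nat \<Rightarrow> stps \<Rightarrow> stps" where "fb L s = filter (\<lambda>e. fst e \<le> L) s"
definition fa :: "nat \<Rightarrow> stps \<Rightarrow> stps" where "fa L s = filter (\<lambda>e. L < fst e) s"
definition cnt :: "'b \<Rightarrow> 'b list \<Rightarrow> nat" where "cnt e s = length (filter ((=) e) s)"

lemma cnt_simps[simp]: "cnt e [] = 0" "cnt e (x#s) = (if x = e then Suc (cnt e s) else cnt e s)"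
  "cnt e (s @ t) = cnt e s + cnt e t"
  by (auto simp: cnt_def)

lemma vstep_cases: "vstep e \<Longrightarrow> snd e = Suc (fst e) \<or> (0 < fst e \<and> snd e = fst e - 1)"
  by (auto simp: vstep_def)

lemma mrg_filter:
  assumes "list_all P bs" "list_all (\<lambda>e. \<not> P e) as"
  shows "filter P (mrg L m bs as) = bs" "filter (\<lambda>e. \<not> P e) (mrg L m bs as) = as"
  using assms by (induction L m bs as rule: mrg.induct) (auto simp: list_all_iff)

lemma mrg_Nil[simp]: "mrg L m [] [] = []" by (cases m) auto

lemma mrg_set: "set (mrg L m bs as) = set bs \<union> set as"
  by (induction L m bs as rule: mrg.induct) auto

lemma mrg_length: "length (mrg L m bs as) = length bs + length as"
  by (induction L m bs as rule: mrg.induct) auto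

lemma mrg_recon:
  assumes "cf c s" "list_all vstep s"
  shows "mrg L (c \<le> L) (fb L s) (fa L s) = s"
  using assms
proof (induction s arbitrary: c)
  case Nil
  then show ?case by (cases "c \<le> L") (auto simp: fb_def fa_def)
next
  case (Cons e s)
  obtain x y where e: "e = (x,y)" by force
  have xc: "x = c" and cfs: "cf y s" using Cons.prems e by auto
  have v: "vstep (x,y)" and vs: "list_all vstep s" using Cons.prems e by auto
  have IH: "mrg L (y \<le> L) (fb L s) (fa L s) = s" using Cons.IH[OF cfs vs] .
  show ?case
  proof (cases "x \<le> L")
    case True
    have "(e \<noteq> (L, Suc L)) = (y \<le> L)" using v True e by (auto simp: vstep_def)
    then show ?thesis using True IH e xc by (simp add: fb_def fa_def)
  next
    case False
    have "(e = (Suc L, L)) = (y \<le> L)" using v False e by (auto simp: vstep_def)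
    then show ?thesis using False IH e xc by (simp add: fb_def fa_def)
  qed
qed

lemma cf_split:
  assumes "cf c s" "list_all vstep s"
  shows "cfb L (if c \<le> L then c else L) (fb L s) \<and> cfa L (if L < c then c else Suc L) (fa L s)"
  using assms
proof (induction s arbitrary: c)
  case Nil
  then show ?case by (simp add: fb_def fa_def)
next
  case (Cons e s)
  obtain x y where e: "e = (x,y)" by force
  have xc: "x = c" and cfs: "cf y s" using Cons.prems e by auto
  have v: "vstep (x,y)" and vs: "list_all vstep s" using Cons.prems e by auto
  note IH = Cons.IH[OF cfs vs]
  show ?case
  proof (cases "x \<le> L")
    case True
    show ?thesis
    proof (cases "x = L")
      case True
      then show ?thesis using IH v e xc by (auto simp: fb_def fa_def vstep_def)
    next
      case False
      then have "y \<le> L" "e \<noteq> (L, Suc L)" using v e xc \<open>x \<le> L\<close> by (auto simp: vstep_def)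
      then show ?thesis using IH e xc \<open>x \<le> L\<close> by (auto simp: fb_def fa_def)
    qed
  next
    case False
    show ?thesis
    proof (cases "x = Suc L")
      case True
      then show ?thesis using IH v e xc by (auto simp: fb_def fa_def vstep_def)
    next
      case F2: False
      then have "L < y" "e \<noteq> (Suc L, L)" using v e xc False by (auto simp: vstep_def)
      then show ?thesis using IH e xc False by (auto simp: fb_def fa_def)
    qed
  qed
qed


definition endp :: "nat \<Rightarrow> stps \<Rightarrow> nat" where "endp c s = (if s = [] then c else snd (last s))"

lemma endp_Cons[simp]: "endp c (e#s) = endp (snd e) s"
  by (simp add: endp_def)
lemma endp_Nil[simp]: "endp c [] = c" by (simp add: endp_def)

lemma fb_last:
  assumes "cf c s" "list_all vstep s" "L < endp c s"
  shows "(fb L s = [] \<longrightarrow> L < c) \<and> (fb L s \<noteq> [] \<longrightarrow> last (fb L s) = (L, Suc L))"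
  using assms
proof (induction s arbitrary: c)
  case Nil
  then show ?case by (simp add: fb_def)
next
  case (Cons e s)
  obtain x y where e: "e = (x,y)" by force
  have xc: "x = c" and cfs: "cf y s" using Cons.prems e by auto
  have v: "vstep (x,y)" and vs: "list_all vstep s" using Cons.prems e by auto
  have en: "L < endp y s" using Cons.prems e by simp
  note IH = Cons.IH[OF cfs vs en]
  show ?case using IH v e xc by (auto simp: fb_def vstep_def)
qed

lemma net_cross:
  assumes "cf c s" "list_all vstep s"
  shows "int (cnt (L, Suc L) s) - int (cnt (Suc L, L) s) =
     (if L < endp c s then 1 else 0) - (if L < c then 1 else 0)"
  using assms
proof (induction s arbitrary: c)
  case Nil
  then show ?case by simp
next
  case (Cons e s)
  obtain x y where e: "e = (x,y)" by force
  have xc: "x = c" and cfs: "cf y s" using Cons.prems e by auto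
  have v: "vstep (x,y)" and vs: "list_all vstep s" using Cons.prems e by auto
  note IH = Cons.IH[OF cfs vs]
  show ?case using IH v e xc by (auto simp: vstep_def)
qed


lemma cnt_filter: "P e \<Longrightarrow> cnt e (filter P s) = cnt e s"
  by (induction s) auto

lemma filter_last_eq: assumes "s \<noteq> []" "P (last s)" shows "filter P s = filter P (butlast s) @ [last s]"
proof -
  have "s = butlast s @ [last s]" using assms by simp
  then have "filter P s = filter P (butlast s @ [last s])" by simp
  then show ?thesis using assms(2) by simp
qed

lemma last_filter: "s \<noteq> [] \<Longrightarrow> P (last s) \<Longrightarrow> last (filter P s) = last s"
  using filter_last_eq by fastforce

lemma last_filter_ne: "s \<noteq> [] \<Longrightarrow> P (last s) \<Longrightarrow> filter P s \<noteq> []"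
  using filter_last_eq by fastforce



definition Rs :: "nat \<Rightarrow> stps \<Rightarrow> bool" where
  "Rs n s \<longleftrightarrow> cf 0 s \<and> list_all vstep s \<and> s \<noteq> [] \<and> last s = (n, Suc n)"

definition Bset :: "nat \<Rightarrow> stps \<Rightarrow> bool" where
  "Bset L b \<longleftrightarrow> cfb L 0 b \<and> list_all (\<lambda>e. fst e \<le> L) b \<and> list_all vstep b \<and> b \<noteq> [] \<and> last b = (L, Suc L)"

definition Aset :: "nat \<Rightarrow> nat \<Rightarrow> nat \<Rightarrow> stps \<Rightarrow> bool" where
  "Aset L n m a \<longleftrightarrow> cfa L (Suc L) a \<and> list_all (\<lambda>e. L < fst e) a \<and> list_all vstep a \<and> a \<noteq> []
     \<and> last a = (n, Suc n) \<and> Suc (cnt (Suc L, L) a) = m"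

lemma Rs_split:
  assumes "Rs n s" "L < n"
  shows "Bset L (fb L s) \<and> Aset L n (cnt (L, Suc L) (fb L s)) (fa L s)"
proof -
  have cf: "cf 0 s" and vs: "list_all vstep s" and ne: "s \<noteq> []" and la: "last s = (n, Suc n)"
    using assms by (auto simp: Rs_def)
  have en: "endp 0 s = Suc n" using ne la by (simp add: endp_def)
  have sp: "cfb L 0 (fb L s) \<and> cfa L (Suc L) (fa L s)" using cf_split[OF cf vs, of L] by simp
  have fl: "(fb L s = [] \<longrightarrow> L < 0) \<and> (fb L s \<noteq> [] \<longrightarrow> last (fb L s) = (L, Suc L))"
    using fb_last[OF cf vs, of L] en assms(2) by simp
  have nc: "int (cnt (L, Suc L) s) - int (cnt (Suc L, L) s) = 1"
    using net_cross[OF cf vs, of L] en assms(2) by simp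
  have c1: "cnt (L, Suc L) (fb L s) = cnt (L, Suc L) s" unfolding fb_def by (rule cnt_filter) simp
  have c2: "cnt (Suc L, L) (fa L s) = cnt (Suc L, L) s" unfolding fa_def by (rule cnt_filter) simp
  have "last (fa L s) = (n, Suc n)" "fa L s \<noteq> []"
    using last_filter[OF ne, of "\<lambda>e. L < fst e"] last_filter_ne[OF ne, of "\<lambda>e. L < fst e"] la assms(2)
    by (auto simp: fa_def)
  moreover have "list_all (\<lambda>e. fst e \<le> L) (fb L s)" "list_all (\<lambda>e. L < fst e) (fa L s)"
    "list_all vstep (fb L s)" "list_all vstep (fa L s)"
    using vs by (auto simp: fb_def fa_def list_all_iff)
  ultimately show ?thesis using sp fl c1 c2 nc by (auto simp: Bset_def Aset_def)
qed


lemma mrg_cf: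
  assumes "if m then c \<le> L else L < c"
    "cfb L (if m then c else L) bs" "cfa L (if m then Suc L else c) as"
    "list_all (\<lambda>e. fst e \<le> L) bs" "list_all (\<lambda>e. L < fst e) as"
    "list_all vstep bs" "list_all vstep as"
    "cnt (L, Suc L) bs = cnt (Suc L, L) as + (if m then 1 else 0)"
    "bs \<noteq> [] \<longrightarrow> last bs = (L, Suc L)"
    "as \<noteq> [] \<longrightarrow> last as \<noteq> (Suc L, L)"
  shows "cf c (mrg L m bs as) \<and> (as \<noteq> [] \<longrightarrow> last (mrg L m bs as) = last as)"
  using assms
proof (induction L m bs as arbitrary: c rule: mrg.induct)
  case (1 L as)
  then show ?case by simp
next
  case (2 L e bs as)
  have p1: "c \<le> L" and p2: "fst e = c" and p2': "cfb L (if e = (L, Suc L) then L else snd e) bs"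
    and p3: "cfa L (Suc L) as" and p4: "fst e \<le> L" "list_all (\<lambda>e. fst e \<le> L) bs"
    and p5: "list_all (\<lambda>e. L < fst e) as" and p6: "vstep e" "list_all vstep bs"
    and p7: "list_all vstep as"
    and p8: "cnt (L, Suc L) (e#bs) = cnt (Suc L, L) as + 1"
    and p9: "last (e#bs) = (L, Suc L)" and p10: "as \<noteq> [] \<longrightarrow> last as \<noteq> (Suc L, L)"
    using "2.prems" by simp_all
  show ?case
  proof (cases "e = (L, Suc L)")
    case True
    have c8: "cnt (L, Suc L) bs = cnt (Suc L, L) as" using p8 True by simp
    have c9: "bs \<noteq> [] \<longrightarrow> last bs = (L, Suc L)" using p9 by (auto split: if_splits)
    have "cf (Suc L) (mrg L (e \<noteq> (L, Suc L)) bs as) \<and> (as \<noteq> [] \<longrightarrow> last (mrg L (e \<noteq> (L, Suc L)) bs as) = last as)"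
      apply (rule "2.IH")
      using True p2' p3 p4 p5 p6 p7 c8 c9 p10 by simp_all
    moreover have "as \<noteq> [] \<Longrightarrow> mrg L False bs as \<noteq> []"
      by (metis length_0_conv add_is_0 mrg_length)
    ultimately show ?thesis using True p2 by auto
  next
    case False
    obtain x y where e: "e = (x,y)" by force
    have yL: "y \<le> L" using p6 p4 False e by (auto simp: vstep_def)
    have bsne: "bs \<noteq> []" using p9 False by auto
    have c8: "cnt (L, Suc L) bs = cnt (Suc L, L) as + 1" using p8 False by simp
    have c9: "bs \<noteq> [] \<longrightarrow> last bs = (L, Suc L)" using p9 bsne by simp
    have "cf y (mrg L (e \<noteq> (L, Suc L)) bs as) \<and> (as \<noteq> [] \<longrightarrow> last (mrg L (e \<noteq> (L, Suc L)) bs as) = last as)"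
      apply (rule "2.IH")
      using False e yL p2' p3 p4 p5 p6 p7 c8 c9 p10 by simp_all
    moreover have "mrg L True bs as \<noteq> []" using bsne by (metis length_0_conv add_is_0 mrg_length)
    ultimately show ?thesis using False e p2 by auto
  qed
next
  case (3 L bs)
  then have "bs = []" by (cases bs rule: rev_cases) auto
  then show ?case by simp
next
  case (4 L bs e as)
  have p1: "L < c" and p2: "cfb L L bs" and p3: "fst e = c"
    and p3': "cfa L (if e = (Suc L, L) then Suc L else snd e) as"
    and p4: "list_all (\<lambda>e. fst e \<le> L) bs" and p5: "L < fst e" "list_all (\<lambda>e. L < fst e) as"
    and p6: "list_all vstep bs" and p7: "vstep e" "list_all vstep as"
    and p8: "cnt (L, Suc L) bs = cnt (Suc L, L) (e#as)"
    and p9: "bs \<noteq> [] \<longrightarrow> last bs = (L, Suc L)" and p10: "last (e#as) \<noteq> (Suc L, L)"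
    using "4.prems" by simp_all
  show ?case
  proof (cases "e = (Suc L, L)")
    case True
    have asne: "as \<noteq> []" using p10 True by auto
    have c8: "cnt (L, Suc L) bs = cnt (Suc L, L) as + 1" using p8 True by simp
    have c10: "as \<noteq> [] \<longrightarrow> last as \<noteq> (Suc L, L)" using p10 asne by simp
    have "cf L (mrg L (e = (Suc L, L)) bs as) \<and> (as \<noteq> [] \<longrightarrow> last (mrg L (e = (Suc L, L)) bs as) = last as)"
      apply (rule "4.IH")
      using True p2 p3' p4 p5 p6 p7 c8 p9 c10 by simp_all
    moreover have "mrg L True bs as \<noteq> []" using asne by (metis length_0_conv add_is_0 mrg_length)
    ultimately show ?thesis using True asne p3 by auto
  next
    case False
    obtain x y where e: "e = (x,y)" by force
    have yL: "L < y" using p7 p5 False e by (auto simp: vstep_def)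
    have c8: "cnt (L, Suc L) bs = cnt (Suc L, L) as" using p8 False by simp
    show ?thesis
    proof (cases "as = []")
      case True
      have "cnt (L, Suc L) bs = 0" using c8 True by simp
      then have "bs = []" using p9 by (cases bs rule: rev_cases) auto
      then show ?thesis using True p3 by simp
    next
      case asne: False
      have c10: "as \<noteq> [] \<longrightarrow> last as \<noteq> (Suc L, L)" using p10 asne by simp
      have "cf y (mrg L (e = (Suc L, L)) bs as) \<and> (as \<noteq> [] \<longrightarrow> last (mrg L (e = (Suc L, L)) bs as) = last as)"
        apply (rule "4.IH")
        using False e yL p2 p3' p4 p5 p6 p7 c8 p9 c10 by simp_all
      moreover have "mrg L False bs as \<noteq> []" using asne by (metis length_0_conv add_is_0 mrg_length)
      ultimately show ?thesis using False e asne p3 by auto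
    qed
  qed
qed

lemma Rs_bij:
  assumes "L < n"
  shows "bij_betw (\<lambda>s. (fb L s, fa L s)) {s. Rs n s}
     {(b, a). Bset L b \<and> Aset L n (cnt (L, Suc L) b) a}"
proof (rule bij_betwI')
  fix s t assume "s \<in> {s. Rs n s}" "t \<in> {s. Rs n s}"
  then have s: "Rs n s" and t: "Rs n t" by auto
  show "((fb L s, fa L s) = (fb L t, fa L t)) = (s = t)"
  proof
    assume eq: "(fb L s, fa L s) = (fb L t, fa L t)"
    have "s = mrg L (0 \<le> L) (fb L s) (fa L s)"
      using mrg_recon[of 0 s L] s by (simp add: Rs_def)
    also have "\<dots> = mrg L (0 \<le> L) (fb L t) (fa L t)" using eq by simp
    also have "\<dots> = t" using mrg_recon[of 0 t L] t by (simp add: Rs_def)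
    finally show "s = t" .
  qed simp
next
  fix s assume "s \<in> {s. Rs n s}"
  then show "(fb L s, fa L s) \<in> {(b, a). Bset L b \<and> Aset L n (cnt (L, Suc L) b) a}"
    using Rs_split[OF _ assms] by auto
next
  fix y assume "y \<in> {(b, a). Bset L b \<and> Aset L n (cnt (L, Suc L) b) a}"
  then obtain b a where y: "y = (b,a)" and B: "Bset L b" and A: "Aset L n (cnt (L, Suc L) b) a" by auto
  define s where "s = mrg L True b a"
  have lb: "list_all (\<lambda>e. fst e \<le> L) b" and la: "list_all (\<lambda>e. L < fst e) a"
    using A B by (auto simp: Aset_def Bset_def)
  have la': "list_all (\<lambda>e. \<not> fst e \<le> L) a" using la by (auto simp: list_all_iff)
  have f1: "fb L s = b" unfolding s_def fb_def using mrg_filter(1)[OF lb la'] .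
  have f2: "fa L s = a" unfolding s_def fa_def using mrg_filter(2)[OF lb la'] by (simp add: not_le)
  have ln: "L < n" by fact
  have "cf 0 s \<and> (a \<noteq> [] \<longrightarrow> last s = last a)" unfolding s_def
    apply (rule mrg_cf) using A B ln by (auto simp: Aset_def Bset_def)
  moreover have "list_all vstep s" using A B by (auto simp: s_def list_all_iff mrg_set Aset_def Bset_def)
  moreover have "s \<noteq> []" using A unfolding s_def Aset_def by (metis length_0_conv add_is_0 mrg_length)
  ultimately have "Rs n s" using A by (auto simp: Rs_def Aset_def)
  then show "\<exists>s\<in>{s. Rs n s}. y = (fb L s, fa L s)" using f1 f2 y by auto
qed


fun ndf :: "nat \<Rightarrow> stps \<Rightarrow> bool" where
  "ndf x [] = True"
| "ndf x (e#s) = (if e = (x, Suc x) then (x, x - 1) \<notin> set s else ndf x s)"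

definition loc :: "nat \<Rightarrow> stps \<Rightarrow> stps" where "loc x s = filter (\<lambda>e. fst e = x) s"

lemma ndf_loc: "ndf x (loc x s) = ndf x s"
  by (induction s) (auto simp: loc_def)

definition PsiC :: "cset_kind \<Rightarrow> nat \<Rightarrow> stps \<Rightarrow> bool" where
  "PsiC C x s = (case C of Cab a b \<Rightarrow> length (loc x s) = a \<and> cnt (x, Suc x) (loc x s) = b
     | Cstar a \<Rightarrow> cnt (x, Suc x) (loc x s) = a
     | Cw \<Rightarrow> ndf x (loc x s))"

lemma loc_fb: "x \<le> L \<Longrightarrow> loc x (fb L s) = loc x s"
  by (auto simp: loc_def fb_def filter_filter intro!: filter_cong)
lemma loc_fa: "L < x \<Longrightarrow> loc x (fa L s) = loc x s"
  by (auto simp: loc_def fa_def filter_filter intro!: filter_cong)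

lemma PsiC_fb: assumes "x \<le> L" shows "PsiC C x (fb L s) = PsiC C x s"
proof -
  have e: "loc x (fb L s) = loc x s" using assms by (rule loc_fb)
  show ?thesis unfolding PsiC_def e ..
qed
lemma PsiC_fa: assumes "L < x" shows "PsiC C x (fa L s) = PsiC C x s"
proof -
  have e: "loc x (fa L s) = loc x s" using assms by (rule loc_fa)
  show ?thesis unfolding PsiC_def e ..
qed

lemma loc_rep: "x \<noteq> y \<Longrightarrow> loc x (replicate m (y, z) @ g) = loc x g"
  by (induction m) (auto simp: loc_def)

lemma PsiC_rep: assumes "x \<noteq> y" shows "PsiC C x (replicate m (y, z) @ g) = PsiC C x g"
proof -
  have e: "loc x (replicate m (y, z) @ g) = loc x g" using assms by (rule loc_rep)
  show ?thesis unfolding PsiC_def e ..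
qed

definition ws :: "(nat \<Rightarrow> real) \<Rightarrow> stps \<Rightarrow> real" where
  "ws p s = prod_list (map (\<lambda>e. bd_trans p (fst e) (snd e)) s)"

lemma ws_simps[simp]: "ws p [] = 1" "ws p (e#s) = bd_trans p (fst e) (snd e) * ws p s"
  "ws p (s @ t) = ws p s * ws p t"
  by (auto simp: ws_def)

lemma ws_filter: "ws p (filter P s) * ws p (filter (\<lambda>e. \<not> P e) s) = ws p s"
  by (induction s) (auto simp: algebra_simps)

lemma ws_fbfa: "ws p s = ws p (fb L s) * ws p (fa L s)"
  using ws_filter[of p "\<lambda>e. fst e \<le> L" s] by (simp add: fb_def fa_def not_le)

lemma bd_trans_nonneg: "(\<forall>x. 0 \<le> p x \<and> p x \<le> 1) \<Longrightarrow> 0 \<le> bd_trans p x y"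
  by (auto simp: bd_trans_def)

lemma ws_nonneg: "(\<forall>x. 0 \<le> p x \<and> p x \<le> 1) \<Longrightarrow> 0 \<le> ws p s"
  by (induction s) (auto intro!: mult_nonneg_nonneg bd_trans_nonneg)

lemma ws_rep: "ws p (replicate m (Suc L, L) @ g) = (1 - p (Suc L)) ^ m * ws p g"
  by (induction m) (auto simp: bd_trans_def)

lemma Aset_ndf:
  assumes "Aset L n m a" "ndf (Suc L) a"
  shows "m \<ge> 1 \<and> (\<exists>g. a = replicate (m - 1) (Suc L, L) @ g \<and> Aset L n 1 g)"
  using assms
proof (induction a arbitrary: m)
  case Nil
  then show ?case by (simp add: Aset_def)
next
  case (Cons e a)
  have m: "m = Suc (cnt (Suc L, L) (e#a))" using Cons.prems by (simp add: Aset_def)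
  have fe: "fst e = Suc L" and v: "vstep e" using Cons.prems by (auto simp: Aset_def)
  show ?case
  proof (cases "e = (Suc L, L)")
    case True
    have ane: "a \<noteq> []" using Cons.prems True by (auto simp: Aset_def)
    have A': "Aset L n (m - 1) a" using Cons.prems True ane by (auto simp: Aset_def)
    have nd: "ndf (Suc L) a" using Cons.prems True by simp
    obtain g where g: "a = replicate (m - 1 - 1) (Suc L, L) @ g" "Aset L n 1 g"
      using Cons.IH[OF A' nd] by blast
    have "m - 1 \<ge> 1" using m True by simp
    then obtain k where k: "m - 1 = Suc k" by (cases "m - 1") auto
    then have ea: "e # a = replicate (m - 1) (Suc L, L) @ g" using g True by simp
    have "m \<ge> 1" using k by simp
    then show ?thesis using g(2) ea by blast
  next
    case False
    then have e: "e = (Suc L, Suc (Suc L))" using fe v by (cases e) (auto simp: vstep_def)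
    then have "(Suc L, L) \<notin> set a" using Cons.prems by simp
    then have "cnt (Suc L, L) a = 0" by (force simp: cnt_def filter_empty_conv)
    then have "m = 1" using m e by simp
    then show ?thesis using Cons.prems by auto
  qed
qed

lemma Aset_rep:
  assumes "Aset L n 1 g" "m \<ge> 1"
  shows "Aset L n m (replicate (m - 1) (Suc L, L) @ g) \<and> ndf (Suc L) (replicate (m - 1) (Suc L, L) @ g)"
proof -
  have g: "cfa L (Suc L) g" "list_all (\<lambda>e. L < fst e) g" "list_all vstep g" "g \<noteq> []"
    "last g = (n, Suc n)" "cnt (Suc L, L) g = 0" using assms by (auto simp: Aset_def)
  have nd: "ndf (Suc L) g"
  proof (cases g)
    case Nil then show ?thesis using g by simp
  next
    case (Cons e g')
    have "fst e = Suc L" "vstep e" "e \<noteq> (Suc L, L)" using g Cons by (auto simp: cnt_def split: if_splits)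
    then have e: "e = (Suc L, Suc (Suc L))" by (cases e) (auto simp: vstep_def)
    have "(Suc L, L) \<notin> set g'" using g(6) Cons e by (auto simp: cnt_def filter_empty_conv)
    then show ?thesis using Cons e by simp
  qed
  have "\<And>k. Aset L n (Suc k) (replicate k (Suc L, L) @ g) \<and> ndf (Suc L) (replicate k (Suc L, L) @ g)"
  proof -
    fix k show "Aset L n (Suc k) (replicate k (Suc L, L) @ g) \<and> ndf (Suc L) (replicate k (Suc L, L) @ g)"
    proof (induction k)
      case 0
      then show ?case using assms nd by simp
    next
      case (Suc k)
      let ?r = "replicate k (Suc L, L) @ g"
      have A: "cfa L (Suc L) ?r" "list_all (\<lambda>e. L < fst e) ?r" "list_all vstep ?r" "?r \<noteq> []"
        "last ?r = (n, Suc n)" "Suc (cnt (Suc L, L) ?r) = Suc k" using Suc.IH unfolding Aset_def by blast+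
      have "vstep (Suc L, L)" by (simp add: vstep_def)
      have l0: "last ((Suc L, L) # ?r) = last ?r" by (rule last_ConsR[OF A(4)])
      have l: "last ((Suc L, L) # ?r) = (n, Suc n)" using l0 A(5) by simp
      have c1: "cfa L (Suc L) ((Suc L, L) # ?r)" using A(1) by simp
      have c2: "list_all (\<lambda>e. L < fst e) ((Suc L, L) # ?r)" using A(2) by simp
      have c3: "list_all vstep ((Suc L, L) # ?r)" using A(3) \<open>vstep (Suc L, L)\<close> by simp
      have c4: "Suc (cnt (Suc L, L) ((Suc L, L) # ?r)) = Suc (Suc k)" using A(6) by simp
      have c5: "(Suc L, L) # ?r \<noteq> []" by simp
      have "Aset L n (Suc (Suc k)) ((Suc L, L) # ?r)" unfolding Aset_def using c1 c2 c3 c4 c5 l by blast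
      moreover have "ndf (Suc L) ((Suc L, L) # ?r)" using Suc.IH by simp
      ultimately show ?case by simp
    qed
  qed
  from this[of "m - 1"] show ?thesis using assms(2) by simp
qed


definition stp :: "nat list \<Rightarrow> stps" where "stp xs = zip xs (tl xs)"

lemma stp_simps[simp]: "stp [] = []" "stp [x] = []" "stp (x#y#ys) = (x,y) # stp (y#ys)"
  by (auto simp: stp_def)

lemma stp_append: "xs \<noteq> [] \<Longrightarrow> stp (xs @ ys) = stp xs @ stp (last xs # ys)"
proof (induction xs)
  case Nil then show ?case by simp
next
  case (Cons x xs)
  show ?case
  proof (cases xs)
    case Nil then show ?thesis by (cases ys) auto
  next
    case (Cons y zs) then show ?thesis using Cons.IH by simp
  qed
qed

lemma length_stp[simp]: "length (stp xs) = length xs - 1"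
  by (simp add: stp_def)

lemma nth_stp: "Suc i < length xs \<Longrightarrow> stp xs ! i = (xs ! i, xs ! Suc i)"
  by (simp add: stp_def nth_tl)

locale bdc =
  fixes M :: "'a measure" and p :: "nat \<Rightarrow> real" and X :: "nat \<Rightarrow> 'a \<Rightarrow> nat"
  assumes chain: "is_bd_chain M p X" and p0: "p 0 = 1"
    and p_pos: "\<And>k. 1 \<le> k \<Longrightarrow> 0 < p k \<and> p k < 1"
begin

sublocale prob_space M using chain by (simp add: is_bd_chain_def)

lemma measX[measurable]: "X t \<in> measurable M (count_space UNIV)"
  using chain by (simp add: is_bd_chain_def)

lemma hp: "\<forall>x. 0 \<le> p x \<and> p x \<le> 1"
proof
  fix x show "0 \<le> p x \<and> p x \<le> 1"
    using p_pos[of x] p0 by (cases "x = 0") auto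
qed

definition cyl :: "nat list \<Rightarrow> 'a set" where
  "cyl xs = {\<omega> \<in> space M. \<forall>i<length xs. X i \<omega> = xs ! i}"

lemma cyl_sets[measurable]: "cyl xs \<in> sets M"
  unfolding cyl_def by measurable

lemma prod_ws: "(\<Prod>i<length xs - 1. bd_trans p (xs!i) (xs!Suc i)) = ws p (stp xs)"
proof (induction xs)
  case Nil then show ?case by simp
next
  case (Cons x xs)
  show ?case
  proof (cases xs)
    case Nil then show ?thesis by simp
  next
    case (Cons y ys)
    have "(\<Prod>i<length (x#xs) - 1. bd_trans p ((x#xs)!i) ((x#xs)!Suc i))
        = (\<Prod>i<Suc (length xs - 1). bd_trans p ((x#xs)!i) ((x#xs)!Suc i))" using Cons by simp
    also have "\<dots> = bd_trans p x y * (\<Prod>i<length xs - 1. bd_trans p (xs!i) (xs!Suc i))"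
      by (subst prod.lessThan_Suc_shift) (simp add: Cons)
    finally show ?thesis using Cons.IH Cons by simp
  qed
qed

lemma cyl_meas: "xs \<noteq> [] \<Longrightarrow> measure M (cyl xs) = (if hd xs = 0 then 1 else 0) * ws p (stp xs)"
  using chain unfolding is_bd_chain_def cyl_def by (simp add: prod_ws[simplified])

lemma cyl_emeas: "xs \<noteq> [] \<Longrightarrow> emeasure M (cyl xs) = ennreal ((if hd xs = 0 then 1 else 0) * ws p (stp xs))"
  by (simp add: emeasure_eq_measure cyl_meas)

lemma bd_pos: "vstep (x,y) \<Longrightarrow> 0 < bd_trans p x y"
  using p_pos[of x] p0 by (cases "x = 0") (auto simp: vstep_def bd_trans_def)

lemma bd_zero: "\<not> vstep (x,y) \<Longrightarrow> bd_trans p x y = 0"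
  by (auto simp: vstep_def bd_trans_def)

lemma ws_zero: "\<not> list_all vstep s \<Longrightarrow> ws p s = 0"
  by (induction s) (auto simp: bd_zero)

lemma ws_nn: "0 \<le> ws p s" using ws_nonneg hp by blast

definition pre :: "nat \<Rightarrow> 'a \<Rightarrow> nat list" where "pre n \<omega> = map (\<lambda>i. X i \<omega>) [0..<n]"

lemma in_cyl_pre: "\<omega> \<in> space M \<Longrightarrow> \<omega> \<in> cyl (pre n \<omega>)"
  by (simp add: cyl_def pre_def)

lemma cyl_null: "xs \<noteq> [] \<Longrightarrow> (if hd xs = 0 then 1 else 0) * ws p (stp xs) = 0 \<Longrightarrow> cyl xs \<in> null_sets M"
  by (auto simp: null_sets_def cyl_emeas split: if_splits)

lemma AE_valid: "AE \<omega> in M. X 0 \<omega> = 0 \<and> (\<forall>t. vstep (X t \<omega>, X (Suc t) \<omega>))"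
proof (rule AE_I')
  let ?B = "{xs. xs \<noteq> [] \<and> (hd xs \<noteq> 0 \<or> \<not> list_all vstep (stp xs))}"
  show "(\<Union>xs\<in>?B. cyl xs) \<in> null_sets M"
  proof (rule null_sets_UN')
    show "countable ?B" by simp
    fix xs assume "xs \<in> ?B"
    then show "cyl xs \<in> null_sets M" by (intro cyl_null) (auto simp: ws_zero)
  qed
  show "{\<omega> \<in> space M. \<not> (X 0 \<omega> = 0 \<and> (\<forall>t. vstep (X t \<omega>, X (Suc t) \<omega>)))} \<subseteq> (\<Union>xs\<in>?B. cyl xs)"
  proof
    fix \<omega> assume w: "\<omega> \<in> {\<omega> \<in> space M. \<not> (X 0 \<omega> = 0 \<and> (\<forall>t. vstep (X t \<omega>, X (Suc t) \<omega>)))}"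
    then have sp: "\<omega> \<in> space M" by auto
    show "\<omega> \<in> (\<Union>xs\<in>?B. cyl xs)"
    proof (cases "X 0 \<omega> = 0")
      case False
      then have "pre 1 \<omega> \<in> ?B" by (simp add: pre_def)
      then show ?thesis using in_cyl_pre[OF sp] by blast
    next
      case True
      then obtain t where t: "\<not> vstep (X t \<omega>, X (Suc t) \<omega>)" using w by auto
      have "stp (pre (Suc (Suc t)) \<omega>) ! t = (X t \<omega>, X (Suc t) \<omega>)"
        by (subst nth_stp) (auto simp: pre_def nth_append)
      then have "(X t \<omega>, X (Suc t) \<omega>) \<in> set (stp (pre (Suc (Suc t)) \<omega>))"
        by (metis length_stp nth_mem pre_def length_map length_upt diff_zero diff_Suc_1 lessI)
      then have "pre (Suc (Suc t)) \<omega> \<in> ?B" using t by (auto simp: list_all_iff pre_def)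
      then show ?thesis using in_cyl_pre[OF sp] by blast
    qed
  qed
qed

lemma xi_eq: "xi X x \<omega> = enat a \<longleftrightarrow> (\<exists>l. distinct l \<and> length l = a \<and> (\<forall>t. X t \<omega> = x \<longleftrightarrow> t \<in> set l))"
proof
  assume "xi X x \<omega> = enat a"
  then have f: "finite {t. X t \<omega> = x}" and c: "card {t. X t \<omega> = x} = a"
    by (auto simp: xi_def split: if_splits)
  obtain l where "set l = {t. X t \<omega> = x}" "distinct l" using finite_distinct_list[OF f] by blast
  then show "\<exists>l. distinct l \<and> length l = a \<and> (\<forall>t. X t \<omega> = x \<longleftrightarrow> t \<in> set l)"
    using c distinct_card by (intro exI[of _ l]) fastforce
next
  assume "\<exists>l. distinct l \<and> length l = a \<and> (\<forall>t. X t \<omega> = x \<longleftrightarrow> t \<in> set l)"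
  then obtain l where l: "distinct l" "length l = a" "\<forall>t. X t \<omega> = x \<longleftrightarrow> t \<in> set l" by blast
  then have "{t. X t \<omega> = x} = set l" by auto
  then show "xi X x \<omega> = enat a" using l by (simp add: xi_def distinct_card)
qed

lemma xi_up_eq: "xi_up X x \<omega> = enat a \<longleftrightarrow> (\<exists>l. distinct l \<and> length l = a \<and>
   (\<forall>t. (X t \<omega> = x \<and> X (Suc t) \<omega> = Suc x) \<longleftrightarrow> t \<in> set l))"
proof
  assume "xi_up X x \<omega> = enat a"
  then have f: "finite {t. X t \<omega> = x \<and> X (Suc t) \<omega> = Suc x}" and c: "card {t. X t \<omega> = x \<and> X (Suc t) \<omega> = Suc x} = a"
    by (auto simp: xi_up_def split: if_splits)
  obtain l where "set l = {t. X t \<omega> = x \<and> X (Suc t) \<omega> = Suc x}" "distinct l" using finite_distinct_list[OF f] by blast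
  then show "\<exists>l. distinct l \<and> length l = a \<and> (\<forall>t. (X t \<omega> = x \<and> X (Suc t) \<omega> = Suc x) \<longleftrightarrow> t \<in> set l)"
    using c distinct_card by (intro exI[of _ l]) fastforce
next
  assume "\<exists>l. distinct l \<and> length l = a \<and> (\<forall>t. (X t \<omega> = x \<and> X (Suc t) \<omega> = Suc x) \<longleftrightarrow> t \<in> set l)"
  then obtain l where l: "distinct l" "length l = a" "\<forall>t. (X t \<omega> = x \<and> X (Suc t) \<omega> = Suc x) \<longleftrightarrow> t \<in> set l" by blast
  then have "{t. X t \<omega> = x \<and> X (Suc t) \<omega> = Suc x} = set l" by auto
  then show "xi_up X x \<omega> = enat a" using l by (simp add: xi_up_def distinct_card)
qed

lemma pred_inC[measurable]: "Measurable.pred M (\<lambda>\<omega>. inC C X x \<omega>)"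
proof (cases C)
  case (Cab a b)
  show ?thesis unfolding Cab inC.simps xi_eq xi_up_eq by measurable
next
  case (Cstar a)
  show ?thesis unfolding Cstar inC.simps xi_up_eq by measurable
next
  case Cw
  show ?thesis unfolding Cw inC.simps weak_cutpoint_def by measurable
qed

end

context bdc begin

lemma stp_snoc: "xs \<noteq> [] \<Longrightarrow> stp (xs @ [y]) = stp xs @ [(last xs, y)]"
  by (simp add: stp_append)

lemma cyl_snoc: "cyl (xs @ [y]) = cyl xs \<inter> {\<omega>. X (length xs) \<omega> = y}"
  by (auto simp: cyl_def nth_append less_Suc_eq)

lemma one_step:
  assumes "xs \<noteq> []"
  shows "emeasure M (cyl xs \<inter> {\<omega>. X (length xs) \<omega> \<noteq> y})
       = ennreal (1 - bd_trans p (last xs) y) * emeasure M (cyl xs)"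
proof -
  have sub: "cyl (xs @ [y]) \<subseteq> cyl xs" by (auto simp: cyl_snoc)
  have eq: "cyl xs \<inter> {\<omega>. X (length xs) \<omega> \<noteq> y} = cyl xs - cyl (xs @ [y])"
    by (auto simp: cyl_snoc)
  have m1: "measure M (cyl (xs @ [y])) = measure M (cyl xs) * bd_trans p (last xs) y"
    using assms by (simp add: cyl_meas stp_snoc hd_append)
  have "measure M (cyl xs \<inter> {\<omega>. X (length xs) \<omega> \<noteq> y}) = measure M (cyl xs) - measure M (cyl (xs @ [y]))"
    unfolding eq by (rule finite_measure_Diff) (auto simp: sub)
  also have "\<dots> = (1 - bd_trans p (last xs) y) * measure M (cyl xs)" using m1 by (simp add: algebra_simps)
  finally have *: "measure M (cyl xs \<inter> {\<omega>. X (length xs) \<omega> \<noteq> y}) = (1 - bd_trans p (last xs) y) * measure M (cyl xs)" .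
  have "bd_trans p (last xs) y \<le> 1" using hp by (auto simp: bd_trans_def)
  then show ?thesis
    by (simp add: emeasure_eq_measure * ennreal_mult'' measure_nonneg)
qed

definition visc :: "nat \<Rightarrow> nat \<Rightarrow> nat list \<Rightarrow> nat" where
  "visc j s xs = card {t \<in> {s..<length xs - 1}. xs ! t = j}"

definition Qs :: "nat \<Rightarrow> nat \<Rightarrow> nat \<Rightarrow> nat \<Rightarrow> nat list set" where
  "Qs j j' s r = {xs. s < length xs \<and> last xs = j \<and> visc j s xs = r \<and>
      (\<forall>t\<in>{s..<length xs - 1}. xs ! t = j \<longrightarrow> xs ! Suc t \<noteq> j')}"

definition Us :: "nat \<Rightarrow> nat \<Rightarrow> nat \<Rightarrow> nat \<Rightarrow> 'a set" where
  "Us j j' s r = (\<Union>xs\<in>Qs j j' s r. cyl xs)"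

lemma cyl_nth: "\<omega> \<in> cyl xs \<Longrightarrow> i < length xs \<Longrightarrow> X i \<omega> = xs ! i"
  by (auto simp: cyl_def)

lemma cyl_eq_len: "\<omega> \<in> cyl xs \<Longrightarrow> \<omega> \<in> cyl ys \<Longrightarrow> length xs = length ys \<Longrightarrow> xs = ys"
  by (metis cyl_nth nth_equalityI)

lemma Qs_disj_aux:
  assumes xs: "xs \<in> Qs j j' s r" and ys: "ys \<in> Qs j j' s r" and w: "\<omega> \<in> cyl xs" "\<omega> \<in> cyl ys"
    and l: "length xs < length ys"
  shows False
proof -
  let ?t0 = "length xs - 1"
  have sx: "s < length xs" "last xs = j" "visc j s xs = r" using xs by (auto simp: Qs_def)
  have sy: "visc j s ys = r" using ys by (auto simp: Qs_def)
  have xne: "xs \<noteq> []" using sx by auto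
  have "xs ! ?t0 = j" using sx xne by (simp add: last_conv_nth)
  then have yt0: "ys ! ?t0 = j" using w l cyl_nth[OF w(1), of ?t0] cyl_nth[OF w(2), of ?t0] xne by simp
  let ?A = "{t \<in> {s..<length xs - 1}. xs ! t = j}"
  let ?B = "{t \<in> {s..<length ys - 1}. ys ! t = j}"
  have "?A \<subseteq> ?B"
  proof
    fix t assume "t \<in> ?A"
    then have "t < length xs - 1" "s \<le> t" "xs ! t = j" by auto
    moreover have "ys ! t = xs ! t" using cyl_nth[OF w(1), of t] cyl_nth[OF w(2), of t] l \<open>t < length xs - 1\<close> by simp
    ultimately show "t \<in> ?B" using l by auto
  qed
  moreover have "?t0 \<in> ?B" "?t0 \<notin> ?A" using yt0 l sx by auto
  ultimately have "insert ?t0 ?A \<subseteq> ?B" by auto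
  then have "card (insert ?t0 ?A) \<le> card ?B" by (intro card_mono) auto
  then have "Suc (card ?A) \<le> card ?B" using \<open>?t0 \<notin> ?A\<close> by simp
  then show False using sx sy by (simp add: visc_def)
qed

lemma Qs_disj: "disjoint_family_on cyl (Qs j j' s r)"
  unfolding disjoint_family_on_def
proof (intro ballI impI)
  fix xs ys assume xs: "xs \<in> Qs j j' s r" and ys: "ys \<in> Qs j j' s r" and ne: "xs \<noteq> ys"
  show "cyl xs \<inter> cyl ys = {}"
  proof (rule ccontr)
    assume "cyl xs \<inter> cyl ys \<noteq> {}"
    then obtain \<omega> where w: "\<omega> \<in> cyl xs" "\<omega> \<in> cyl ys" by auto
    consider "length xs < length ys" | "length ys < length xs" | "length xs = length ys" by linarith
    then show False
    proof cases
      case 1 then show ?thesis using Qs_disj_aux[OF xs ys w] by blast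
    next
      case 2 then show ?thesis using Qs_disj_aux[OF ys xs w(2) w(1)] by blast
    next
      case 3 then show ?thesis using cyl_eq_len[OF w 3] ne by blast
    qed
  qed
qed

lemma Us_step_sub: "Us j j' s (Suc r) \<subseteq> (\<Union>xs\<in>Qs j j' s r. cyl xs \<inter> {\<omega>. X (length xs) \<omega> \<noteq> j'})"
proof
  fix \<omega> assume "\<omega> \<in> Us j j' s (Suc r)"
  then obtain ys where ys: "ys \<in> Qs j j' s (Suc r)" and w: "\<omega> \<in> cyl ys" by (auto simp: Us_def)
  let ?A = "{t \<in> {s..<length ys - 1}. ys ! t = j}"
  have cA: "card ?A = Suc r" using ys by (simp add: Qs_def visc_def)
  have fA: "finite ?A" by simp
  have neA: "?A \<noteq> {}"
  proof
    assume "?A = {}" then have "card ?A = 0" by (simp only: card.empty)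
    with cA show False by simp
  qed
  define \<tau> where "\<tau> = Max ?A"
  have tA: "\<tau> \<in> ?A" unfolding \<tau>_def by (rule Max_in[OF fA neA])
  have tmax: "\<And>t. t \<in> ?A \<Longrightarrow> t \<le> \<tau>" using fA by (simp add: \<tau>_def)
  have t1: "s \<le> \<tau>" "\<tau> < length ys - 1" "ys ! \<tau> = j" using tA by auto
  have bad: "\<forall>t\<in>{s..<length ys - 1}. ys ! t = j \<longrightarrow> ys ! Suc t \<noteq> j'" using ys by (simp add: Qs_def)
  define xs where "xs = take (Suc \<tau>) ys"
  have lx: "length xs = Suc \<tau>" using t1 by (simp add: xs_def)
  have xsn: "\<And>t. t < Suc \<tau> \<Longrightarrow> xs ! t = ys ! t" by (simp add: xs_def)
  have "{t \<in> {s..<length xs - 1}. xs ! t = j} = ?A - {\<tau>}"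
  proof -
    have "{t \<in> {s..<length xs - 1}. xs ! t = j} = {t \<in> {s..<\<tau>}. ys ! t = j}" using lx xsn by auto
    also have "\<dots> = ?A - {\<tau>}" using tmax t1 by force
    finally show ?thesis .
  qed
  then have vx: "visc j s xs = r" using cA tA fA by (simp add: visc_def)
  have "xs \<in> Qs j j' s r"
    unfolding Qs_def
  proof (intro CollectI conjI)
    show "s < length xs" using lx t1 by simp
    show "last xs = j" using lx xsn[of \<tau>] t1 by (subst last_conv_nth) auto
    show "visc j s xs = r" by (rule vx)
    show "\<forall>t\<in>{s..<length xs - 1}. xs ! t = j \<longrightarrow> xs ! Suc t \<noteq> j'"
      using bad lx xsn t1 by auto
  qed
  moreover have "\<omega> \<in> cyl xs" using w lx t1 by (auto simp: cyl_def xs_def)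
  moreover have "X (length xs) \<omega> \<noteq> j'"
    using cyl_nth[OF w, of "Suc \<tau>"] bad t1 lx by auto
  ultimately show "\<omega> \<in> (\<Union>xs\<in>Qs j j' s r. cyl xs \<inter> {\<omega>. X (length xs) \<omega> \<noteq> j'})" by blast
qed

lemma Us_sets[measurable]: "Us j j' s r \<in> sets M"
  unfolding Us_def by (intro sets.countable_UN') auto

lemma Us_bound:
  assumes c: "c = bd_trans p j j'"
  shows "emeasure M (Us j j' s r) \<le> ennreal ((1 - c) ^ r)"
proof (induction r)
  case 0
  then show ?case using emeasure_space_1 emeasure_space[of M] by (simp add: Us_def)
next
  case (Suc r)
  have meas: "cyl xs \<inter> {\<omega>. X (length xs) \<omega> \<noteq> j'} \<in> sets M" for xs
  proof -
    have "cyl xs \<inter> {\<omega>. X (length xs) \<omega> \<noteq> j'} = cyl xs \<inter> {\<omega>\<in>space M. X (length xs) \<omega> \<noteq> j'}"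
      by (auto simp: cyl_def)
    moreover have "{\<omega>\<in>space M. X (length xs) \<omega> \<noteq> j'} \<in> sets M" by measurable
    ultimately show ?thesis by auto
  qed
  have "emeasure M (Us j j' s (Suc r)) \<le> emeasure M (\<Union>xs\<in>Qs j j' s r. cyl xs \<inter> {\<omega>. X (length xs) \<omega> \<noteq> j'})"
    by (rule emeasure_mono[OF Us_step_sub], rule sets.countable_UN') (auto intro!: meas)
  also have "\<dots> = (\<integral>\<^sup>+ xs. emeasure M (cyl xs \<inter> {\<omega>. X (length xs) \<omega> \<noteq> j'}) \<partial>count_space (Qs j j' s r))"
    apply (rule emeasure_UN_countable)
    subgoal by (rule meas)
    subgoal by simp
    subgoal using Qs_disj[of j j' s r] unfolding disjoint_family_on_def by blast
    done
  also have "\<dots> = (\<integral>\<^sup>+ xs. ennreal (1 - c) * emeasure M (cyl xs) \<partial>count_space (Qs j j' s r))"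
  proof (rule nn_integral_cong)
    fix xs assume "xs \<in> space (count_space (Qs j j' s r))"
    then have "xs \<noteq> []" "last xs = j" by (auto simp: Qs_def)
    then show "emeasure M (cyl xs \<inter> {\<omega>. X (length xs) \<omega> \<noteq> j'}) = ennreal (1 - c) * emeasure M (cyl xs)"
      using one_step[of xs j'] c by simp
  qed
  also have "\<dots> = ennreal (1 - c) * (\<integral>\<^sup>+ xs. emeasure M (cyl xs) \<partial>count_space (Qs j j' s r))"
    by (rule nn_integral_cmult) simp
  also have "(\<integral>\<^sup>+ xs. emeasure M (cyl xs) \<partial>count_space (Qs j j' s r)) = emeasure M (Us j j' s r)"
    unfolding Us_def by (rule emeasure_UN_countable[symmetric]) (auto intro: Qs_disj)
  also have "ennreal (1 - c) * emeasure M (Us j j' s r) \<le> ennreal (1 - c) * ennreal ((1 - c) ^ r)"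
    by (rule mult_left_mono[OF Suc.IH]) simp
  also have "\<dots> = ennreal ((1 - c) ^ Suc r)"
  proof -
    have "c \<le> 1" using hp c by (auto simp: bd_trans_def)
    then show ?thesis by (subst ennreal_mult[symmetric]) auto
  qed
  finally show ?case .
qed

end

context bdc begin

lemma pre_nth: "i < n \<Longrightarrow> pre n \<omega> ! i = X i \<omega>"
  by (simp add: pre_def)
lemma pre_len[simp]: "length (pre n \<omega>) = n"
  by (simp add: pre_def)

lemma IO_null:
  assumes v: "vstep (j, j')"
  shows "AE \<omega> in M. \<not> (infinite {t. X t \<omega> = j} \<and> finite {t. X t \<omega> = j \<and> X (Suc t) \<omega> = j'})"
proof (rule AE_I')
  define c where "c = bd_trans p j j'"
  have c0: "0 < c" using bd_pos[OF v] by (simp add: c_def)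
  have c1: "c \<le> 1" using hp by (auto simp: bd_trans_def c_def)
  show "(\<Union>s. \<Inter>r. Us j j' s r) \<in> null_sets M"
  proof (rule null_sets_UN)
    fix s
    have ms: "(\<Inter>r. Us j j' s r) \<in> sets M" by measurable
    have le: "measure M (\<Inter>r. Us j j' s r) \<le> (1 - c) ^ r" for r
    proof -
      have "emeasure M (\<Inter>r. Us j j' s r) \<le> emeasure M (Us j j' s r)"
        by (rule emeasure_mono) auto
      also have "\<dots> \<le> ennreal ((1 - c) ^ r)" by (rule Us_bound[OF c_def])
      finally show ?thesis using c1 by (simp add: emeasure_eq_measure)
    qed
    have lim: "(\<lambda>r. (1 - c) ^ r) \<longlonglongrightarrow> 0" by (rule LIMSEQ_power_zero) (use c0 c1 in auto)
    have "measure M (\<Inter>r. Us j j' s r) \<le> 0"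
      by (rule LIMSEQ_le_const[OF lim]) (use le in auto)
    then have "measure M (\<Inter>r. Us j j' s r) = 0" using measure_nonneg[of M] by (simp add: antisym)
    then show "(\<Inter>r. Us j j' s r) \<in> null_sets M" using ms by (simp add: emeasure_eq_measure null_sets_def)
  qed
  show "{\<omega> \<in> space M. \<not> \<not> (infinite {t. X t \<omega> = j} \<and> finite {t. X t \<omega> = j \<and> X (Suc t) \<omega> = j'})}
      \<subseteq> (\<Union>s. \<Inter>r. Us j j' s r)"
  proof
    fix \<omega> assume "\<omega> \<in> {\<omega> \<in> space M. \<not> \<not> (infinite {t. X t \<omega> = j} \<and> finite {t. X t \<omega> = j \<and> X (Suc t) \<omega> = j'})}"
    then have sp: "\<omega> \<in> space M" and inf: "infinite {t. X t \<omega> = j}"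
      and fin: "finite {t. X t \<omega> = j \<and> X (Suc t) \<omega> = j'}" by auto
    obtain s where s: "{t. X t \<omega> = j \<and> X (Suc t) \<omega> = j'} \<subseteq> {..<s}"
      using finite_nat_bounded[OF fin] by blast
    define f where "f N = card {t \<in> {s..<N}. X t \<omega> = j}" for N
    have f_Suc: "f (Suc N) = f N + (if X N \<omega> = j then 1 else 0)" if "s \<le> N" for N
    proof -
      have "{t \<in> {s..<Suc N}. X t \<omega> = j} = (if X N \<omega> = j then insert N {t \<in> {s..<N}. X t \<omega> = j}
          else {t \<in> {s..<N}. X t \<omega> = j})" using that by (cases "X N \<omega> = j") (auto simp: less_Suc_eq)
      then show ?thesis by (simp add: f_def)
    qed
    have f_small: "f N = 0" if "N \<le> s" for N using that by (simp add: f_def)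
    have unb: "\<exists>N. m \<le> f N" for m
    proof -
      have "{t. X t \<omega> = j} \<subseteq> {..<s} \<union> {t. s \<le> t \<and> X t \<omega> = j}" by auto
      then have "infinite {t. s \<le> t \<and> X t \<omega> = j}" using inf finite_subset by blast
      then obtain B where B: "finite B" "card B = m" "B \<subseteq> {t. s \<le> t \<and> X t \<omega> = j}"
        using infinite_arbitrarily_large by blast
      define N where "N = Suc (Max (insert 0 B))"
      have "B \<subseteq> {t \<in> {s..<N}. X t \<omega> = j}"
      proof
        fix t assume tB: "t \<in> B"
        have "t \<le> Max (insert 0 B)" using B(1) tB by (intro Max_ge) auto
        then have tN: "t < N" unfolding N_def by (rule le_imp_less_Suc)
        show "t \<in> {t \<in> {s..<N}. X t \<omega> = j}" using B(3) tB tN by auto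
      qed
      then have "card B \<le> card {t \<in> {s..<N}. X t \<omega> = j}" by (intro card_mono) auto
      then have "m \<le> f N" unfolding f_def using B(2) by simp
      then show ?thesis by blast
    qed
    show "\<omega> \<in> (\<Union>s. \<Inter>r. Us j j' s r)"
    proof (intro UN_I[of s] INT_I)
      show "s \<in> UNIV" by simp
      fix r
      define N0 where "N0 = (LEAST N. Suc r \<le> f N)"
      have N0: "Suc r \<le> f N0" unfolding N0_def using unb by (rule LeastI_ex)
      have N0s: "s < N0"
      proof (rule ccontr)
        assume "\<not> s < N0" then have "f N0 = 0" using f_small by simp
        then show False using N0 by simp
      qed
      define \<tau> where "\<tau> = N0 - 1"
      have tN: "N0 = Suc \<tau>" "s \<le> \<tau>" using N0s by (auto simp: \<tau>_def)
      have "\<tau> < N0" using tN by simp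
      then have lt: "\<not> Suc r \<le> f \<tau>" unfolding N0_def by (rule not_less_Least[of _ "\<lambda>N. Suc r \<le> f N"])
      have fs: "f N0 = f \<tau> + (if X \<tau> \<omega> = j then 1 else 0)" using f_Suc[OF tN(2)] tN by simp
      have ft: "f \<tau> = r" and xt: "X \<tau> \<omega> = j" using N0 lt fs by (auto split: if_splits)
      let ?ys = "pre (Suc \<tau>) \<omega>"
      have "?ys \<in> Qs j j' s r"
        unfolding Qs_def
      proof (intro CollectI conjI)
        show "s < length ?ys" using tN by simp
        show "last ?ys = j" using xt by (simp add: pre_def)
        have "{t \<in> {s..<length ?ys - 1}. ?ys ! t = j} = {t \<in> {s..<\<tau>}. X t \<omega> = j}"
          by (auto simp: pre_nth)
        then show "visc j s ?ys = r" using ft by (simp add: visc_def f_def)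
        show "\<forall>t\<in>{s..<length ?ys - 1}. ?ys ! t = j \<longrightarrow> ?ys ! Suc t \<noteq> j'"
          using s by (auto simp: pre_nth)
      qed
      then show "\<omega> \<in> Us j j' s r" using in_cyl_pre[OF sp] by (auto simp: Us_def)
    qed
  qed
qed

end

lemma INF_cmult_ennreal:
  fixes c :: ennreal
  assumes "c < top"
  shows "c * (INF s. f s) = (INF s. c * f s)"
proof -
  have mono: "mono ((*) c)" by (auto simp: mono_def mult_left_mono)
  have co: "continuous_on UNIV ((*) c)"
    using ennreal_continuous_on_cmult[OF assms, of UNIV "\<lambda>x. x"] by (simp add: continuous_on_id)
  have "continuous (at x) ((*) c)" for x using co by (simp add: continuous_on_eq_continuous_at)
  then have cont: "continuous (at_right (Inf (range f))) ((*) c)"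
    by (simp add: continuous_at_imp_continuous_at_within)
  have "c * Inf (range f) = (INF s\<in>range f. c * s)"
    by (rule continuous_at_Inf_mono[OF mono cont]) auto
  then show ?thesis by (simp add: image_image)
qed

context bdc begin

definition Om :: "nat \<Rightarrow> nat list \<Rightarrow> 'a set" where
  "Om n \<rho> = {\<omega> \<in> cyl \<rho>. \<forall>t \<ge> length \<rho> - 1. n < X t \<omega>}"

definition Ts :: "nat \<Rightarrow> nat \<Rightarrow> nat list set" where
  "Ts n s = {\<tau>. length \<tau> = s \<and> (\<forall>x\<in>set \<tau>. n < x)}"

definition rr :: "nat \<Rightarrow> nat \<Rightarrow> ennreal" where
  "rr n s = (\<integral>\<^sup>+ \<tau>. ennreal (ws p (stp (Suc n # \<tau>))) \<partial>count_space (Ts n s))"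

definition hh :: "nat \<Rightarrow> ennreal" where "hh n = (INF s. rr n s)"

definition Es :: "nat \<Rightarrow> nat list \<Rightarrow> nat \<Rightarrow> 'a set" where
  "Es n \<rho> s = {\<omega> \<in> cyl \<rho>. \<forall>t\<in>{length \<rho>..<length \<rho> + s}. n < X t \<omega>}"

lemma cyl_append: "cyl (xs @ ys) = {\<omega> \<in> cyl xs. \<forall>i<length ys. X (length xs + i) \<omega> = ys ! i}"
  apply (auto simp: cyl_def nth_append)
  apply (metis add_diff_inverse_nat nat_add_left_cancel_less)
  done

lemma Es_eq: "Es n \<rho> s = (\<Union>\<tau>\<in>Ts n s. cyl (\<rho> @ \<tau>))"
proof
  show "Es n \<rho> s \<subseteq> (\<Union>\<tau>\<in>Ts n s. cyl (\<rho> @ \<tau>))"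
  proof
    fix \<omega> assume w: "\<omega> \<in> Es n \<rho> s"
    define \<tau> where "\<tau> = map (\<lambda>i. X (length \<rho> + i) \<omega>) [0..<s]"
    have "\<tau> \<in> Ts n s" using w by (auto simp: Ts_def \<tau>_def Es_def)
    moreover have "\<omega> \<in> cyl (\<rho> @ \<tau>)" using w by (auto simp: cyl_append \<tau>_def Es_def)
    ultimately show "\<omega> \<in> (\<Union>\<tau>\<in>Ts n s. cyl (\<rho> @ \<tau>))" by blast
  qed
  show "(\<Union>\<tau>\<in>Ts n s. cyl (\<rho> @ \<tau>)) \<subseteq> Es n \<rho> s"
  proof
    fix \<omega> assume "\<omega> \<in> (\<Union>\<tau>\<in>Ts n s. cyl (\<rho> @ \<tau>))"
    then obtain \<tau> where t: "\<tau> \<in> Ts n s" "\<omega> \<in> cyl (\<rho> @ \<tau>)" by blast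
    have "n < X t \<omega>" if "t \<in> {length \<rho>..<length \<rho> + s}" for t
    proof -
      have i: "t - length \<rho> < length \<tau>" using t that by (auto simp: Ts_def)
      have "\<forall>i<length \<tau>. X (length \<rho> + i) \<omega> = \<tau> ! i" using t(2) by (simp add: cyl_append)
      then have "X (length \<rho> + (t - length \<rho>)) \<omega> = \<tau> ! (t - length \<rho>)" using i by blast
      moreover have "\<tau> ! (t - length \<rho>) \<in> set \<tau>" using t that by (auto simp: Ts_def)
      ultimately show ?thesis using t that by (auto simp: Ts_def)
    qed
    then show "\<omega> \<in> Es n \<rho> s" using t by (auto simp: Es_def cyl_append)
  qed
qed

lemma Es_emeas:
  assumes "\<rho> \<noteq> []" "hd \<rho> = 0" "last \<rho> = Suc n"
  shows "emeasure M (Es n \<rho> s) = ennreal (ws p (stp \<rho>)) * rr n s"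
proof -
  have "emeasure M (Es n \<rho> s) = (\<integral>\<^sup>+ \<tau>. emeasure M (cyl (\<rho> @ \<tau>)) \<partial>count_space (Ts n s))"
    unfolding Es_eq
    apply (rule emeasure_UN_countable)
    subgoal by simp
    subgoal by simp
    subgoal unfolding disjoint_family_on_def Ts_def using cyl_eq_len by fastforce
    done
  also have "\<dots> = (\<integral>\<^sup>+ \<tau>. ennreal (ws p (stp \<rho>)) * ennreal (ws p (stp (Suc n # \<tau>))) \<partial>count_space (Ts n s))"
  proof (rule nn_integral_cong)
    fix \<tau>
    have "emeasure M (cyl (\<rho> @ \<tau>)) = ennreal (ws p (stp (\<rho> @ \<tau>)))"
      using assms by (simp add: cyl_emeas)
    also have "\<dots> = ennreal (ws p (stp \<rho>)) * ennreal (ws p (stp (Suc n # \<tau>)))"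
      using assms by (simp add: stp_append ennreal_mult ws_nn)
    finally show "emeasure M (cyl (\<rho> @ \<tau>)) = ennreal (ws p (stp \<rho>)) * ennreal (ws p (stp (Suc n # \<tau>)))" .
  qed
  also have "\<dots> = ennreal (ws p (stp \<rho>)) * rr n s"
    unfolding rr_def by (rule nn_integral_cmult) simp
  finally show ?thesis .
qed

lemma Om_emeas:
  assumes "\<rho> \<noteq> []" "hd \<rho> = 0" "last \<rho> = Suc n"
  shows "emeasure M (Om n \<rho>) = ennreal (ws p (stp \<rho>)) * hh n"
proof -
  have ms: "Es n \<rho> s \<in> sets M" for s
    unfolding Es_eq by (rule sets.countable_UN') auto
  have dec: "decseq (Es n \<rho>)"
    unfolding decseq_def Es_def by auto
  have int: "Om n \<rho> = (\<Inter>s. Es n \<rho> s)"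
  proof
    show "Om n \<rho> \<subseteq> (\<Inter>s. Es n \<rho> s)" by (auto simp: Om_def Es_def)
    show "(\<Inter>s. Es n \<rho> s) \<subseteq> Om n \<rho>"
    proof
      fix \<omega> assume w: "\<omega> \<in> (\<Inter>s. Es n \<rho> s)"
      then have c: "\<omega> \<in> cyl \<rho>" by (auto simp: Es_def)
      have "n < X t \<omega>" if "length \<rho> - 1 \<le> t" for t
      proof (cases "t = length \<rho> - 1")
        case True
        then have "X t \<omega> = \<rho> ! (length \<rho> - 1)" using c assms by (simp add: cyl_nth)
        then show ?thesis using assms True by (simp add: last_conv_nth)
      next
        case False
        then have "t \<in> {length \<rho>..<length \<rho> + Suc t}" using that by auto
        moreover from w have "\<omega> \<in> Es n \<rho> (Suc t)" by blast
        ultimately show ?thesis by (auto simp: Es_def)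
      qed
      then show "\<omega> \<in> Om n \<rho>" using c by (auto simp: Om_def)
    qed
  qed
  have "emeasure M (Om n \<rho>) = (INF s. emeasure M (Es n \<rho> s))"
    unfolding int by (rule INF_emeasure_decseq[symmetric]) (use ms dec in auto)
  also have "\<dots> = (INF s. ennreal (ws p (stp \<rho>)) * rr n s)"
    using Es_emeas[OF assms] by simp
  also have "\<dots> = ennreal (ws p (stp \<rho>)) * hh n"
    unfolding hh_def by (rule INF_cmult_ennreal[symmetric]) simp
  finally show ?thesis .
qed

lemma Om_sets[measurable]: "Om n \<rho> \<in> sets M"
proof -
  have "Om n \<rho> = cyl \<rho> \<inter> {\<omega> \<in> space M. \<forall>t. length \<rho> - 1 \<le> t \<longrightarrow> n < X t \<omega>}"
    by (auto simp: Om_def cyl_def)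
  also have "\<dots> \<in> sets M" by measurable
  finally show ?thesis .
qed

end

lemma ndf_idx: "ndf x s \<longleftrightarrow> (\<forall>u v. u < v \<and> v < length s \<and> s ! u = (x, Suc x) \<longrightarrow> s ! v \<noteq> (x, x - 1))"
proof (induction s)
  case Nil then show ?case by simp
next
  case (Cons e s)
  show ?case
  proof (cases "e = (x, Suc x)")
    case True
    have "((x, x - 1) \<notin> set s) = (\<forall>u v. u < v \<and> v < length (e # s) \<and> (e # s) ! u = (x, Suc x) \<longrightarrow> (e # s) ! v \<noteq> (x, x - 1))"
    proof
      assume a: "(x, x - 1) \<notin> set s"
      show "\<forall>u v. u < v \<and> v < length (e # s) \<and> (e # s) ! u = (x, Suc x) \<longrightarrow> (e # s) ! v \<noteq> (x, x - 1)"
      proof (intro allI impI)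
        fix u v assume "u < v \<and> v < length (e # s) \<and> (e # s) ! u = (x, Suc x)"
        then obtain v' where "v = Suc v'" "v' < length s" by (cases v) auto
        then show "(e # s) ! v \<noteq> (x, x - 1)" using a nth_mem by fastforce
      qed
    next
      assume a: "\<forall>u v. u < v \<and> v < length (e # s) \<and> (e # s) ! u = (x, Suc x) \<longrightarrow> (e # s) ! v \<noteq> (x, x - 1)"
      show "(x, x - 1) \<notin> set s"
      proof
        assume "(x, x - 1) \<in> set s"
        then obtain v' where "v' < length s" "s ! v' = (x, x - 1)" by (auto simp: in_set_conv_nth)
        then show False using a[rule_format, of 0 "Suc v'"] True by simp
      qed
    qed
    then show ?thesis using True by simp
  next
    case False
    have "(\<forall>u v. u < v \<and> v < length (e # s) \<and> (e # s) ! u = (x, Suc x) \<longrightarrow> (e # s) ! v \<noteq> (x, x - 1))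
       = (\<forall>u v. u < v \<and> v < length s \<and> s ! u = (x, Suc x) \<longrightarrow> s ! v \<noteq> (x, x - 1))"
    proof
      assume a: "\<forall>u v. u < v \<and> v < length (e # s) \<and> (e # s) ! u = (x, Suc x) \<longrightarrow> (e # s) ! v \<noteq> (x, x - 1)"
      show "\<forall>u v. u < v \<and> v < length s \<and> s ! u = (x, Suc x) \<longrightarrow> s ! v \<noteq> (x, x - 1)"
        using a[rule_format, of "Suc u" "Suc v" for u v] by auto
    next
      assume a: "\<forall>u v. u < v \<and> v < length s \<and> s ! u = (x, Suc x) \<longrightarrow> s ! v \<noteq> (x, x - 1)"
      show "\<forall>u v. u < v \<and> v < length (e # s) \<and> (e # s) ! u = (x, Suc x) \<longrightarrow> (e # s) ! v \<noteq> (x, x - 1)"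
      proof (intro allI impI)
        fix u v assume h: "u < v \<and> v < length (e # s) \<and> (e # s) ! u = (x, Suc x)"
        then obtain u' where u: "u = Suc u'" using False by (cases u) auto
        then obtain v' where v: "v = Suc v'" using h by (cases v) auto
        show "(e # s) ! v \<noteq> (x, x - 1)" using a[rule_format, of u' v'] h u v by simp
      qed
    qed
    then show ?thesis using False Cons.IH by simp
  qed
qed

definition wcl :: "nat \<Rightarrow> nat list \<Rightarrow> bool" where
  "wcl x \<rho> \<longleftrightarrow> (\<exists>t<length \<rho>. \<rho> ! t = x \<and> (\<forall>i<t. \<rho> ! i \<le> x) \<and> (\<forall>i. t < i \<and> i < length \<rho> \<longrightarrow> x \<le> \<rho> ! i))"

definition vl :: "nat list \<Rightarrow> bool" where
  "vl \<rho> \<longleftrightarrow> (\<forall>i. Suc i < length \<rho> \<longrightarrow> vstep (\<rho> ! i, \<rho> ! Suc i))"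

lemma ivt_list:
  assumes "vl \<rho>" "b < length \<rho>" "a \<le> b" "\<rho> ! a \<le> c" "c \<le> \<rho> ! b"
  shows "\<exists>t. a \<le> t \<and> t \<le> b \<and> \<rho> ! t = c"
  using assms(2-5)
proof (induction b)
  case 0 then show ?case by auto
next
  case (Suc b)
  show ?case
  proof (cases "\<rho> ! Suc b = c")
    case True then show ?thesis using Suc.prems by auto
  next
    case False
    then have cl: "c < \<rho> ! Suc b" using Suc.prems by simp
    show ?thesis
    proof (cases "a = Suc b")
      case True then show ?thesis using Suc.prems False by simp
    next
      case False
      have v: "vstep (\<rho> ! b, \<rho> ! Suc b)" using assms(1) Suc.prems by (simp add: vl_def)
      have "c \<le> \<rho> ! b" using v cl by (auto simp: vstep_def)
      then obtain t where "a \<le> t" "t \<le> b" "\<rho> ! t = c" using Suc.IH Suc.prems False by force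
      then show ?thesis by (intro exI[of _ t]) auto
    qed
  qed
qed

lemma ndf_wcl:
  assumes v: "vl \<rho>" and h0: "\<rho> ! 0 = 0" and ne: "\<rho> \<noteq> []" and lst: "x < last \<rho>"
  shows "ndf x (stp \<rho>) \<longleftrightarrow> wcl x \<rho>"
proof
  assume nd: "ndf x (stp \<rho>)"
  have lr: "last \<rho> = \<rho> ! (length \<rho> - 1)" using ne by (simp add: last_conv_nth)
  define A where "A = {i. i < length \<rho> \<and> Suc x \<le> \<rho> ! i}"
  have "length \<rho> - 1 \<in> A" using lst lr ne by (simp add: A_def)
  then have exA: "\<exists>i. i \<in> A" by blast
  define a where "a = (LEAST i. i \<in> A)"
  have aA: "a \<in> A" unfolding a_def using exA by (rule LeastI_ex)
  have amin: "\<And>i. i < a \<Longrightarrow> i \<notin> A" unfolding a_def by (rule not_less_Least)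
  have a0: "0 < a" using aA h0 by (cases a) (auto simp: A_def)
  define u where "u = a - 1"
  have ua: "a = Suc u" using a0 by (simp add: u_def)
  have "\<rho> ! u < Suc x" using amin[of u] ua aA by (auto simp: A_def)
  moreover have "vstep (\<rho> ! u, \<rho> ! a)" using v aA ua by (auto simp: vl_def A_def)
  moreover have "Suc x \<le> \<rho> ! a" using aA by (simp add: A_def)
  ultimately have ru: "\<rho> ! u = x" "\<rho> ! a = Suc x" by (auto simp: vstep_def)
  have bef: "\<forall>i<u. \<rho> ! i \<le> x"
  proof (intro allI impI)
    fix i assume "i < u"
    then have "i \<notin> A" "i < length \<rho>" using amin[of i] ua aA by (auto simp: A_def)
    then show "\<rho> ! i \<le> x" by (simp add: A_def)
  qed
  have aft: "\<forall>i. u < i \<and> i < length \<rho> \<longrightarrow> x \<le> \<rho> ! i"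
  proof (rule ccontr)
    assume "\<not> (\<forall>i. u < i \<and> i < length \<rho> \<longrightarrow> x \<le> \<rho> ! i)"
    then have exB: "\<exists>i. u < i \<and> i < length \<rho> \<and> \<rho> ! i < x" by auto
    define b where "b = (LEAST i. u < i \<and> i < length \<rho> \<and> \<rho> ! i < x)"
    have bB: "u < b \<and> b < length \<rho> \<and> \<rho> ! b < x" unfolding b_def using exB by (rule LeastI_ex)
    have bmin: "\<And>i. i < b \<Longrightarrow> \<not> (u < i \<and> i < length \<rho> \<and> \<rho> ! i < x)"
      unfolding b_def by (rule not_less_Least)
    have "b \<noteq> a" using bB ru by auto
    then have ub: "Suc u < b" using bB ua by auto
    define v' where "v' = b - 1"
    have bv: "b = Suc v'" using ub by (simp add: v'_def)
    have "x \<le> \<rho> ! v'" using bmin[of v'] bv bB ub by auto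
    moreover have "vstep (\<rho> ! v', \<rho> ! b)" using v bB bv by (auto simp: vl_def)
    ultimately have rv: "\<rho> ! v' = x" "\<rho> ! b = x - 1" "0 < x" using bB by (auto simp: vstep_def)
    have s1: "stp \<rho> ! u = (x, Suc x)" using ru ua aA by (simp add: nth_stp A_def)
    have s2: "stp \<rho> ! v' = (x, x - 1)" using rv bv bB by (simp add: nth_stp)
    have "u < v'" "v' < length (stp \<rho>)" using ub bv bB by auto
    then show False using nd s1 s2 unfolding ndf_idx by blast
  qed
  show "wcl x \<rho>" unfolding wcl_def using ru bef aft aA ua by (intro exI[of _ u]) (auto simp: A_def)
next
  assume "wcl x \<rho>"
  then obtain t where t: "t < length \<rho>" "\<rho> ! t = x" "\<forall>i<t. \<rho> ! i \<le> x"
    "\<forall>i. t < i \<and> i < length \<rho> \<longrightarrow> x \<le> \<rho> ! i" by (auto simp: wcl_def)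
  show "ndf x (stp \<rho>)" unfolding ndf_idx
  proof (intro allI impI notI)
    fix u w assume h: "u < w \<and> w < length (stp \<rho>) \<and> stp \<rho> ! u = (x, Suc x)" and hw: "stp \<rho> ! w = (x, x - 1)"
    have su: "Suc u < length \<rho>" "Suc w < length \<rho>" using h by auto
    have ru: "\<rho> ! u = x" "\<rho> ! Suc u = Suc x" using h nth_stp[OF su(1)] by auto
    have rw: "\<rho> ! w = x" "\<rho> ! Suc w = x - 1" using hw nth_stp[OF su(2)] by auto
    have "t \<le> u"
    proof (rule ccontr)
      assume "\<not> t \<le> u"
      then have "Suc u \<le> t" by simp
      then show False using t(2) t(3)[rule_format, of "Suc u"] ru by (cases "Suc u = t") auto
    qed
    then have "t < Suc w" "Suc w < length \<rho>" using h by auto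
    then have "x \<le> x - 1" using t(4) rw by auto
    moreover have "vstep (\<rho> ! w, \<rho> ! Suc w)" using v su(2) by (simp add: vl_def)
    then have "vstep (x, x - 1)" using rw by simp
    ultimately show False by (auto simp: vstep_def)
  qed
qed

context bdc begin

definition Rst :: "nat \<Rightarrow> nat list set" where
  "Rst n = {\<rho>. 2 \<le> length \<rho> \<and> Rs n (stp \<rho>)}"

lemma Rst_props:
  assumes "\<rho> \<in> Rst n"
  shows "\<rho> \<noteq> []" "hd \<rho> = 0" "\<rho> ! 0 = 0" "last \<rho> = Suc n" "vl \<rho>"
proof -
  have l: "2 \<le> length \<rho>" and R: "Rs n (stp \<rho>)" using assms by (auto simp: Rst_def)
  show ne: "\<rho> \<noteq> []" using l by auto
  have s0: "stp \<rho> ! 0 = (\<rho> ! 0, \<rho> ! 1)" using l by (simp add: nth_stp)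
  have "hd (stp \<rho>) = stp \<rho> ! 0" using R by (simp add: Rs_def hd_conv_nth)
  moreover have "fst (hd (stp \<rho>)) = 0" using R by (cases "stp \<rho>") (auto simp: Rs_def)
  ultimately show r0: "\<rho> ! 0 = 0" using s0 by simp
  then show "hd \<rho> = 0" using ne by (simp add: hd_conv_nth)
  have sne: "stp \<rho> \<noteq> []" using R by (simp add: Rs_def)
  have e1: "last (stp \<rho>) = stp \<rho> ! (length (stp \<rho>) - 1)" by (rule last_conv_nth[OF sne])
  have e2: "length (stp \<rho>) - 1 = length \<rho> - 2" by simp
  have "last (stp \<rho>) = stp \<rho> ! (length \<rho> - 2)" using e1 e2 by simp
  also have "\<dots> = (\<rho> ! (length \<rho> - 2), \<rho> ! Suc (length \<rho> - 2))" using l by (simp add: nth_stp)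
  finally have "\<rho> ! Suc (length \<rho> - 2) = Suc n" using R by (simp add: Rs_def)
  moreover have "Suc (length \<rho> - 2) = length \<rho> - 1" using l by simp
  ultimately show "last \<rho> = Suc n" using ne by (simp add: last_conv_nth)
  show "vl \<rho>" unfolding vl_def
  proof (intro allI impI)
    fix i assume "Suc i < length \<rho>"
    then have i: "i < length (stp \<rho>)" "stp \<rho> ! i = (\<rho> ! i, \<rho> ! Suc i)" by (auto simp: nth_stp)
    then have "stp \<rho> ! i \<in> set (stp \<rho>)" by (intro nth_mem) simp
    then have "(\<rho> ! i, \<rho> ! Suc i) \<in> set (stp \<rho>)" using i(2) by simp
    then show "vstep (\<rho> ! i, \<rho> ! Suc i)" using R by (auto simp: Rs_def list_all_iff)
  qed
qed

lemma Om_X: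
  assumes "\<rho> \<in> Rst n" "\<omega> \<in> Om n \<rho>"
  shows "\<And>t. t < length \<rho> \<Longrightarrow> X t \<omega> = \<rho> ! t" "\<And>t. length \<rho> - 1 \<le> t \<Longrightarrow> n < X t \<omega>"
  using assms by (auto simp: Om_def cyl_def)

lemma Om_visits:
  assumes R: "\<rho> \<in> Rst n" and w: "\<omega> \<in> Om n \<rho>" and x: "x \<le> n"
  shows "{t. X t \<omega> = x} = {i. i < length (stp \<rho>) \<and> fst (stp \<rho> ! i) = x}"
    "{t. X t \<omega> = x \<and> X (Suc t) \<omega> = Suc x} = {i. i < length (stp \<rho>) \<and> stp \<rho> ! i = (x, Suc x)}"
proof -
  have lt: "t < length \<rho> - 1" if "X t \<omega> = x" for t
    using Om_X(2)[OF R w, of t] that x by (cases "length \<rho> - 1 \<le> t") auto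
  show "{t. X t \<omega> = x} = {i. i < length (stp \<rho>) \<and> fst (stp \<rho> ! i) = x}"
  proof (intro set_eqI iffI)
    fix t assume "t \<in> {t. X t \<omega> = x}"
    then have a: "X t \<omega> = x" by simp
    then have st: "Suc t < length \<rho>" using lt by fastforce
    then show "t \<in> {i. i < length (stp \<rho>) \<and> fst (stp \<rho> ! i) = x}"
      using a Om_X(1)[OF R w, of t] nth_stp[OF st] by auto
  next
    fix t assume "t \<in> {i. i < length (stp \<rho>) \<and> fst (stp \<rho> ! i) = x}"
    then show "t \<in> {t. X t \<omega> = x}" using Om_X(1)[OF R w, of t] by (auto simp: nth_stp)
  qed
  show "{t. X t \<omega> = x \<and> X (Suc t) \<omega> = Suc x} = {i. i < length (stp \<rho>) \<and> stp \<rho> ! i = (x, Suc x)}"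
  proof (intro set_eqI iffI)
    fix t assume "t \<in> {t. X t \<omega> = x \<and> X (Suc t) \<omega> = Suc x}"
    then have a: "X t \<omega> = x" "X (Suc t) \<omega> = Suc x" by auto
    then have st: "Suc t < length \<rho>" using lt by fastforce
    then show "t \<in> {i. i < length (stp \<rho>) \<and> stp \<rho> ! i = (x, Suc x)}"
      using a Om_X(1)[OF R w, of t] Om_X(1)[OF R w, of "Suc t"] nth_stp[OF st] by auto
  next
    fix t assume "t \<in> {i. i < length (stp \<rho>) \<and> stp \<rho> ! i = (x, Suc x)}"
    then show "t \<in> {t. X t \<omega> = x \<and> X (Suc t) \<omega> = Suc x}"
      using Om_X(1)[OF R w, of t] Om_X(1)[OF R w, of "Suc t"] by (auto simp: nth_stp)
  qed
qed

lemma len_filter_card: "length (filter P s) = card {i. i < length s \<and> P (s ! i)}"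
  by (rule length_filter_conv_card)

lemma Om_inC:
  assumes R: "\<rho> \<in> Rst n" and w: "\<omega> \<in> Om n \<rho>" and x: "x \<le> n"
  shows "inC C X x \<omega> \<longleftrightarrow> PsiC C x (stp \<rho>)"
proof -
  have xi: "xi X x \<omega> = enat (length (loc x (stp \<rho>)))"
    unfolding xi_def Om_visits(1)[OF R w x] loc_def len_filter_card by simp
  have c1: "cnt (x, Suc x) (loc x (stp \<rho>)) = cnt (x, Suc x) (stp \<rho>)"
    unfolding loc_def by (rule cnt_filter) simp
  have c2: "cnt (x, Suc x) (stp \<rho>) = card {i. i < length (stp \<rho>) \<and> stp \<rho> ! i = (x, Suc x)}"
    unfolding cnt_def length_filter_conv_card by (rule arg_cong[where f=card]) auto
  have xu: "xi_up X x \<omega> = enat (cnt (x, Suc x) (loc x (stp \<rho>)))"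
    unfolding c1 c2 xi_up_def Om_visits(2)[OF R w x] by simp
  have wc: "weak_cutpoint X x \<omega> \<longleftrightarrow> wcl x \<rho>"
  proof
    assume "weak_cutpoint X x \<omega>"
    then obtain t where t: "X t \<omega> = x" "\<forall>i<t. X i \<omega> \<le> x" "\<forall>i>t. x \<le> X i \<omega>"
      by (auto simp: weak_cutpoint_def)
    have tl: "t < length \<rho>" using Om_X(2)[OF R w, of t] t x by (cases "length \<rho> - 1 \<le> t") auto
    show "wcl x \<rho>" unfolding wcl_def
      using t tl Om_X(1)[OF R w] by (intro exI[of _ t]) auto
  next
    assume "wcl x \<rho>"
    then obtain t where t: "t < length \<rho>" "\<rho> ! t = x" "\<forall>i<t. \<rho> ! i \<le> x"
      "\<forall>i. t < i \<and> i < length \<rho> \<longrightarrow> x \<le> \<rho> ! i" by (auto simp: wcl_def)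
    have "x \<le> X i \<omega>" if "t < i" for i
    proof (cases "i < length \<rho>")
      case True then show ?thesis using t that Om_X(1)[OF R w, of i] by auto
    next
      case False
      then have "length \<rho> - 1 \<le> i" by simp
      then show ?thesis using Om_X(2)[OF R w, of i] x by auto
    qed
    then show "weak_cutpoint X x \<omega>" unfolding weak_cutpoint_def
      using t Om_X(1)[OF R w] by (intro exI[of _ t]) auto
  qed
  have "ndf x (stp \<rho>) \<longleftrightarrow> wcl x \<rho>"
    by (rule ndf_wcl) (use Rst_props[OF R] x in auto)
  then show ?thesis using xi xu wc by (cases C) (auto simp: PsiC_def ndf_loc)
qed

end

lemma cf_stp: "cf c s \<Longrightarrow> stp (c # map snd s) = s"
proof (induction s arbitrary: c)
  case Nil then show ?case by simp
next
  case (Cons e s)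
  then show ?case by (cases e) auto
qed

lemma stp_inj: "2 \<le> length xs \<Longrightarrow> 2 \<le> length ys \<Longrightarrow> stp xs = stp ys \<Longrightarrow> xs = ys"
proof -
  assume a: "2 \<le> length xs" "2 \<le> length ys" "stp xs = stp ys"
  have "length xs - 1 = length ys - 1" using arg_cong[OF a(3), of length] by simp
  then have l: "length xs = length ys" using a(1,2) by arith
  show "xs = ys"
  proof (rule nth_equalityI[OF l])
    fix i assume i: "i < length xs"
    show "xs ! i = ys ! i"
    proof (cases "Suc i < length xs")
      case True
      then show ?thesis using nth_stp[OF True] nth_stp[of i ys] a(3) l by simp
    next
      case False
      then have "i = Suc (i - 1)" "Suc (i - 1) < length xs" using i a(1) by auto
      then show ?thesis using nth_stp[of "i - 1" xs] nth_stp[of "i - 1" ys] a(3) l by (metis snd_conv)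
    qed
  qed
qed

context bdc begin

definition good :: "'a \<Rightarrow> bool" where
  "good \<omega> \<longleftrightarrow> X 0 \<omega> = 0 \<and> (\<forall>t. vstep (X t \<omega>, X (Suc t) \<omega>)) \<and>
     (\<forall>j j'. vstep (j, j') \<longrightarrow> \<not> (infinite {t. X t \<omega> = j} \<and> finite {t. X t \<omega> = j \<and> X (Suc t) \<omega> = j'}))"

lemma AE_good: "AE \<omega> in M. good \<omega>"
proof -
  have "AE \<omega> in M. \<forall>j j'. vstep (j, j') \<longrightarrow> \<not> (infinite {t. X t \<omega> = j} \<and> finite {t. X t \<omega> = j \<and> X (Suc t) \<omega> = j'})"
  proof (subst AE_all_countable, intro allI, subst AE_all_countable, intro allI)
    fix j j' :: nat
    show "AE \<omega> in M. vstep (j, j') \<longrightarrow> \<not> (infinite {t. X t \<omega> = j} \<and> finite {t. X t \<omega> = j \<and> X (Suc t) \<omega> = j'})"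
    proof (cases "vstep (j, j')")
      case True then show ?thesis using IO_null[OF True] by simp
    next
      case False then show ?thesis by simp
    qed
  qed
  then show ?thesis using AE_valid unfolding good_def by eventually_elim auto
qed

lemma ivtX:
  assumes g: "good \<omega>" and ab: "a \<le> b" "X a \<omega> \<le> c" "c \<le> X b \<omega>"
  shows "\<exists>t. a \<le> t \<and> t \<le> b \<and> X t \<omega> = c"
proof -
  have v: "vl (pre (Suc b) \<omega>)" using g by (auto simp: vl_def good_def pre_nth)
  obtain t where "a \<le> t" "t \<le> b" "pre (Suc b) \<omega> ! t = c"
    using ivt_list[OF v, of b a c] ab by (auto simp: pre_nth)
  then show ?thesis by (auto simp: pre_nth)
qed

lemma inf_up: "good \<omega> \<Longrightarrow> infinite {t. X t \<omega> = y} \<Longrightarrow> infinite {t. X t \<omega> = Suc y}"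
proof -
  assume g: "good \<omega>" and inf: "infinite {t. X t \<omega> = y}"
  have "vstep (y, Suc y)" by (simp add: vstep_def)
  then have i2: "infinite {t. X t \<omega> = y \<and> X (Suc t) \<omega> = Suc y}" using g inf by (auto simp: good_def)
  have "Suc ` {t. X t \<omega> = y \<and> X (Suc t) \<omega> = Suc y} \<subseteq> {t. X t \<omega> = Suc y}" by auto
  moreover have "infinite (Suc ` {t. X t \<omega> = y \<and> X (Suc t) \<omega> = Suc y})"
    using i2 finite_imageD inj_Suc by (metis inj_on_subset subset_UNIV)
  ultimately show ?thesis using finite_subset by blast
qed

lemma inf_down: "good \<omega> \<Longrightarrow> 0 < y \<Longrightarrow> infinite {t. X t \<omega> = y} \<Longrightarrow> infinite {t. X t \<omega> = y - 1}"
proof -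
  assume g: "good \<omega>" and y: "0 < y" and inf: "infinite {t. X t \<omega> = y}"
  have "vstep (y, y - 1)" using y by (simp add: vstep_def)
  then have i2: "infinite {t. X t \<omega> = y \<and> X (Suc t) \<omega> = y - 1}" using g inf by (auto simp: good_def)
  have "Suc ` {t. X t \<omega> = y \<and> X (Suc t) \<omega> = y - 1} \<subseteq> {t. X t \<omega> = y - 1}" by auto
  moreover have "infinite (Suc ` {t. X t \<omega> = y \<and> X (Suc t) \<omega> = y - 1})"
    using i2 finite_imageD inj_Suc by (metis inj_on_subset subset_UNIV)
  ultimately show ?thesis using finite_subset by blast
qed

lemma good_finite:
  assumes g: "good \<omega>" and fin: "finite {t. X t \<omega> = L \<and> X (Suc t) \<omega> = Suc L}"
  shows "finite {t. X t \<omega> = x}"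
proof (rule ccontr)
  assume inf: "infinite {t. X t \<omega> = x}"
  have upd: "infinite {t. X t \<omega> = x + d}" for d
    by (induction d) (use inf inf_up[OF g] in auto)
  have dnd: "d \<le> x \<Longrightarrow> infinite {t. X t \<omega> = x - d}" for d
  proof (induction d)
    case 0 then show ?case using inf by simp
  next
    case (Suc d)
    then have "infinite {t. X t \<omega> = x - d - 1}" using inf_down[OF g, of "x - d"] by simp
    then show ?case by (simp add: diff_Suc)
  qed
  have infL: "infinite {t. X t \<omega> = L}"
  proof (cases "x \<le> L")
    case True then show ?thesis using upd[of "L - x"] by simp
  next
    case False then show ?thesis using dnd[of "x - L"] by simp
  qed
  have "vstep (L, Suc L)" by (simp add: vstep_def)
  then show False using g infL fin by (auto simp: good_def)
qed

lemma good_Om: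
  assumes g: "good \<omega>" and sp: "\<omega> \<in> space M" and fin: "finite {t. X t \<omega> = L \<and> X (Suc t) \<omega> = Suc L}"
  shows "\<exists>\<rho>\<in>Rst n. \<omega> \<in> Om n \<rho>"
proof -
  have "finite (\<Union>x\<le>n. {t. X t \<omega> = x})" using good_finite[OF g fin] by auto
  then obtain T0 where T0: "(\<Union>x\<le>n. {t. X t \<omega> = x}) \<subseteq> {..<T0}" using finite_nat_bounded by blast
  have big: "n < X t \<omega>" if "T0 \<le> t" for t
  proof (rule ccontr)
    assume "\<not> n < X t \<omega>" then have "t \<in> (\<Union>x\<le>n. {t. X t \<omega> = x})" by auto
    then show False using T0 that by auto
  qed
  have x0: "X 0 \<omega> = 0" using g by (simp add: good_def)
  obtain t1 where "t1 \<le> T0" "X t1 \<omega> = n" using ivtX[OF g, of 0 T0 n] big[of T0] x0 by auto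
  then have Vne: "{t. X t \<omega> = n} \<noteq> {}" by auto
  have Vfin: "finite {t. X t \<omega> = n}" using good_finite[OF g fin] .
  define T where "T = Max {t. X t \<omega> = n}"
  have XT: "X T \<omega> = n" using Max_in[OF Vfin Vne] by (simp add: T_def)
  have Tmax: "t \<le> T" if "X t \<omega> = n" for t using Max_ge[OF Vfin] that by (simp add: T_def)
  have after: "n < X t \<omega>" if "T < t" for t
  proof (rule ccontr)
    assume "\<not> n < X t \<omega>"
    moreover have "X t \<omega> \<noteq> n" using Tmax that by fastforce
    ultimately have lt: "X t \<omega> < n" by simp
    have "n \<le> X (t + T0) \<omega>" using big[of "t + T0"] by simp
    from ivtX[OF g le_add1 less_imp_le[OF lt] this]
    obtain t' where "t \<le> t'" "X t' \<omega> = n" by blast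
    then show False using Tmax that by fastforce
  qed
  have XT1: "X (Suc T) \<omega> = Suc n"
  proof -
    have "vstep (X T \<omega>, X (Suc T) \<omega>)" using g by (simp add: good_def)
    then show ?thesis using XT after[of "Suc T"] by (auto simp: vstep_def)
  qed
  define \<rho> where "\<rho> = pre (Suc (Suc T)) \<omega>"
  have lr: "length \<rho> = Suc (Suc T)" by (simp add: \<rho>_def)
  have cfs: "cf (hd \<rho>) (stp \<rho>)"
  proof -
    have "cf c (stp (c # xs))" for c xs
      by (induction xs arbitrary: c) simp_all
    then show ?thesis using lr by (cases \<rho>) auto
  qed
  have h0: "hd \<rho> = 0"
  proof -
    have "\<rho> \<noteq> []" using lr by auto
    then have "hd \<rho> = \<rho> ! 0" by (simp add: hd_conv_nth)
    also have "\<dots> = X 0 \<omega>" by (simp add: \<rho>_def pre_nth)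
    finally show ?thesis using x0 by simp
  qed
  have vs: "list_all vstep (stp \<rho>)"
  proof -
    have "vstep e" if "e \<in> set (stp \<rho>)" for e
    proof -
      from that obtain i where i: "i < length (stp \<rho>)" "e = stp \<rho> ! i" by (metis in_set_conv_nth)
      then have "Suc i < length \<rho>" by simp
      then have "e = (X i \<omega>, X (Suc i) \<omega>)" using i nth_stp by (auto simp: \<rho>_def pre_nth)
      then show ?thesis using g by (simp add: good_def)
    qed
    then show ?thesis by (simp add: list_all_iff)
  qed
  have ne: "stp \<rho> \<noteq> []"
  proof
    assume "stp \<rho> = []" then have "length (stp \<rho>) = 0" by simp
    with lr show False by simp
  qed
  have ls: "last (stp \<rho>) = (n, Suc n)"
  proof -
    have "last (stp \<rho>) = stp \<rho> ! T" using lr by (simp add: last_conv_nth[OF ne])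
    also have "\<dots> = (X T \<omega>, X (Suc T) \<omega>)" using lr nth_stp[of T \<rho>] by (simp add: \<rho>_def pre_nth)
    finally show ?thesis using XT XT1 by simp
  qed
  have "\<rho> \<in> Rst n"
    unfolding Rst_def Rs_def using lr cfs h0 vs ls ne by auto
  moreover have "\<omega> \<in> Om n \<rho>"
    unfolding Om_def using in_cyl_pre[OF sp] after lr XT1 by (auto simp: \<rho>_def le_Suc_eq)
  ultimately show ?thesis by blast
qed

end

lemma Bset_cnt: "Bset L b \<Longrightarrow> 1 \<le> cnt (L, Suc L) b"
proof -
  assume B: "Bset L b"
  then have "b \<noteq> []" "last b = (L, Suc L)" by (auto simp: Bset_def)
  then have "(L, Suc L) \<in> set b" by (metis last_in_set)
  then have "filter ((=) (L, Suc L)) b \<noteq> []" by (metis (mono_tags) filter_empty_conv)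
  then show ?thesis by (simp add: cnt_def Suc_le_eq)
qed

context bdc begin

lemma Rst_sec: "\<rho> \<in> Rst n \<Longrightarrow> \<rho> ! (length \<rho> - 2) = n"
proof -
  assume "\<rho> \<in> Rst n"
  then have l: "2 \<le> length \<rho>" and R: "Rs n (stp \<rho>)" by (auto simp: Rst_def)
  have sne: "stp \<rho> \<noteq> []" using R by (simp add: Rs_def)
  have e1: "last (stp \<rho>) = stp \<rho> ! (length (stp \<rho>) - 1)" by (rule last_conv_nth[OF sne])
  have e2: "length (stp \<rho>) - 1 = length \<rho> - 2" by simp
  have "last (stp \<rho>) = stp \<rho> ! (length \<rho> - 2)" using e1 e2 by simp
  also have "\<dots> = (\<rho> ! (length \<rho> - 2), \<rho> ! Suc (length \<rho> - 2))" using l by (simp add: nth_stp)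
  finally show ?thesis using R by (simp add: Rs_def)
qed

lemma Om_disj: "disjoint_family_on (Om n) (Rst n)"
  unfolding disjoint_family_on_def
proof (intro ballI impI)
  have aux: False if R1: "\<rho> \<in> Rst n" and R2: "\<rho>' \<in> Rst n" and w: "\<omega> \<in> Om n \<rho>" "\<omega> \<in> Om n \<rho>'"
    and l: "length \<rho> < length \<rho>'" for \<rho> \<rho>' \<omega>
  proof -
    have l2: "2 \<le> length \<rho>" using R1 by (simp add: Rst_def)
    have "X (length \<rho>' - 2) \<omega> = \<rho>' ! (length \<rho>' - 2)" using Om_X(1)[OF R2 w(2), of "length \<rho>' - 2"] l by simp
    also have "\<dots> = n" using Rst_sec[OF R2] .
    finally have "X (length \<rho>' - 2) \<omega> = n" .
    moreover have "n < X (length \<rho>' - 2) \<omega>" using Om_X(2)[OF R1 w(1), of "length \<rho>' - 2"] l l2 by simp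
    ultimately show False by simp
  qed
  fix \<rho> \<rho>' assume R1: "\<rho> \<in> Rst n" and R2: "\<rho>' \<in> Rst n" and ne: "\<rho> \<noteq> \<rho>'"
  show "Om n \<rho> \<inter> Om n \<rho>' = {}"
  proof (rule ccontr)
    assume "Om n \<rho> \<inter> Om n \<rho>' \<noteq> {}"
    then obtain \<omega> where w: "\<omega> \<in> Om n \<rho>" "\<omega> \<in> Om n \<rho>'" by auto
    consider "length \<rho> < length \<rho>'" | "length \<rho>' < length \<rho>" | "length \<rho> = length \<rho>'" by linarith
    then show False
    proof cases
      case 1 then show ?thesis using aux[OF R1 R2 w] by blast
    next
      case 2 then show ?thesis using aux[OF R2 R1 w(2) w(1)] by blast
    next
      case 3
      have "\<omega> \<in> cyl \<rho>" "\<omega> \<in> cyl \<rho>'" using w by (auto simp: Om_def)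
      then show ?thesis using cyl_eq_len 3 ne by blast
    qed
  qed
qed

lemma emeas_event:
  assumes Ev: "Ev \<in> sets M" "\<And>\<omega>. \<omega> \<in> Ev \<Longrightarrow> finite {t. X t \<omega> = L \<and> X (Suc t) \<omega> = Suc L}"
    and tr: "\<And>\<rho> \<omega>. \<rho> \<in> Rst n \<Longrightarrow> \<omega> \<in> Om n \<rho> \<Longrightarrow> \<omega> \<in> Ev \<longleftrightarrow> \<Psi> (stp \<rho>)"
  shows "emeasure M Ev = (\<integral>\<^sup>+ s. ennreal (ws p s) \<partial>count_space {s. Rs n s \<and> \<Psi> s}) * hh n"
proof -
  define I where "I = {\<rho> \<in> Rst n. \<Psi> (stp \<rho>)}"
  define U where "U = (\<Union>\<rho>\<in>I. Om n \<rho>)"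
  have Us: "U \<in> sets M" unfolding U_def by (rule sets.countable_UN') auto
  have "AE \<omega> in M. \<omega> \<in> Ev \<longleftrightarrow> \<omega> \<in> U"
    using AE_good AE_space
  proof eventually_elim
    case (elim \<omega>)
    show ?case
    proof
      assume e: "\<omega> \<in> Ev"
      obtain \<rho> where r: "\<rho> \<in> Rst n" "\<omega> \<in> Om n \<rho>" using good_Om[OF elim(1) elim(2) Ev(2)[OF e]] by blast
      then have "\<Psi> (stp \<rho>)" using tr e by blast
      then show "\<omega> \<in> U" using r by (auto simp: U_def I_def)
    next
      assume "\<omega> \<in> U"
      then obtain \<rho> where r: "\<rho> \<in> Rst n" "\<Psi> (stp \<rho>)" "\<omega> \<in> Om n \<rho>" by (auto simp: U_def I_def)
      then show "\<omega> \<in> Ev" using tr by blast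
    qed
  qed
  then have "emeasure M Ev = emeasure M U" by (rule emeasure_eq_AE) (use Ev Us in auto)
  also have "\<dots> = (\<integral>\<^sup>+ \<rho>. emeasure M (Om n \<rho>) \<partial>count_space I)"
    unfolding U_def
    apply (rule emeasure_UN_countable)
    subgoal by simp
    subgoal by simp
    subgoal using Om_disj[of n] unfolding I_def disjoint_family_on_def by blast
    done
  also have "\<dots> = (\<integral>\<^sup>+ \<rho>. ennreal (ws p (stp \<rho>)) * hh n \<partial>count_space I)"
  proof (rule nn_integral_cong)
    fix \<rho> assume "\<rho> \<in> space (count_space I)"
    then have R: "\<rho> \<in> Rst n" by (simp add: I_def)
    show "emeasure M (Om n \<rho>) = ennreal (ws p (stp \<rho>)) * hh n"
      using Rst_props[OF R] by (intro Om_emeas) auto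
  qed
  also have "\<dots> = (\<integral>\<^sup>+ \<rho>. ennreal (ws p (stp \<rho>)) \<partial>count_space I) * hh n"
    by (rule nn_integral_multc) simp
  also have "(\<integral>\<^sup>+ \<rho>. ennreal (ws p (stp \<rho>)) \<partial>count_space I) = (\<integral>\<^sup>+ s. ennreal (ws p s) \<partial>count_space {s. Rs n s \<and> \<Psi> s})"
  proof (rule nn_integral_bij_count_space[of stp I _ "\<lambda>s. ennreal (ws p s)"])
    show "bij_betw stp I {s. Rs n s \<and> \<Psi> s}"
      unfolding bij_betw_def
    proof
      show "inj_on stp I" unfolding inj_on_def I_def Rst_def using stp_inj by blast
      show "stp ` I = {s. Rs n s \<and> \<Psi> s}"
      proof
        show "stp ` I \<subseteq> {s. Rs n s \<and> \<Psi> s}" by (auto simp: I_def Rst_def)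
        show "{s. Rs n s \<and> \<Psi> s} \<subseteq> stp ` I"
        proof
          fix s assume s: "s \<in> {s. Rs n s \<and> \<Psi> s}"
          then have cf: "cf 0 s" and sne: "s \<noteq> []" by (auto simp: Rs_def)
          have st: "stp (0 # map snd s) = s" by (rule cf_stp[OF cf])
          have "2 \<le> length (0 # map snd s)" using sne by (cases s) auto
          then have "0 # map snd s \<in> I" using s st by (auto simp: I_def Rst_def)
          then show "s \<in> stp ` I" using st by (metis image_eqI)
        qed
      qed
    qed
  qed
  finally show ?thesis .
qed

lemma decomp:
  assumes Ln: "L < n"
  shows "(\<integral>\<^sup>+ s. ennreal (ws p s) \<partial>count_space {s. Rs n s \<and> Pb (fb L s) \<and> Pa (fa L s)})
    = (\<integral>\<^sup>+ b. ennreal (ws p b) * (\<integral>\<^sup>+ a. ennreal (ws p a) \<partial>count_space {a. Aset L n (cnt (L, Suc L) b) a \<and> Pa a})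
        \<partial>count_space {b. Bset L b \<and> Pb b})"
proof -
  let ?C = "{s. Rs n s \<and> Pb (fb L s) \<and> Pa (fa L s)}"
  let ?DB = "{b. Bset L b \<and> Pb b}"
  let ?DA = "\<lambda>b. {a. Aset L n (cnt (L, Suc L) b) a \<and> Pa a}"
  let ?D = "{(b, a). b \<in> ?DB \<and> a \<in> ?DA b}"
  note bij = Rs_bij[OF Ln]
  have bijC: "bij_betw (\<lambda>s. (fb L s, fa L s)) ?C ?D"
  proof (rule bij_betw_subset[OF bij])
    show "?C \<subseteq> {s. Rs n s}" by auto
    show "(\<lambda>s. (fb L s, fa L s)) ` ?C = ?D"
    proof
      show "(\<lambda>s. (fb L s, fa L s)) ` ?C \<subseteq> ?D" using Rs_split[OF _ Ln] by auto
      show "?D \<subseteq> (\<lambda>s. (fb L s, fa L s)) ` ?C"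
      proof
        fix z assume z: "z \<in> ?D"
        then have "z \<in> {(b, a). Bset L b \<and> Aset L n (cnt (L, Suc L) b) a}" by auto
        then obtain s where s: "Rs n s" "z = (fb L s, fa L s)" using bij_betw_imp_surj_on[OF bij] by force
        then have "s \<in> ?C" using z by auto
        then show "z \<in> (\<lambda>s. (fb L s, fa L s)) ` ?C" using s by blast
      qed
    qed
  qed
  have "(\<integral>\<^sup>+ s. ennreal (ws p s) \<partial>count_space ?C)
      = (\<integral>\<^sup>+ s. (\<lambda>z. ennreal (ws p (fst z)) * ennreal (ws p (snd z))) (fb L s, fa L s) \<partial>count_space ?C)"
  proof (rule nn_integral_cong)
    fix s
    show "ennreal (ws p s) = (\<lambda>z. ennreal (ws p (fst z)) * ennreal (ws p (snd z))) (fb L s, fa L s)"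
      using ws_fbfa[of p s L] by (simp add: ennreal_mult ws_nn)
  qed
  also have "\<dots> = (\<integral>\<^sup>+ z. ennreal (ws p (fst z)) * ennreal (ws p (snd z)) \<partial>count_space ?D)"
    by (rule nn_integral_bij_count_space[OF bijC])
  also have "\<dots> = (\<integral>\<^sup>+ z. ennreal (ws p (fst z)) * ennreal (ws p (snd z)) * indicator ?D z \<partial>count_space UNIV)"
    by (rule nn_integral_count_space_indicator) simp
  also have "\<dots> = (\<integral>\<^sup>+ b. \<integral>\<^sup>+ a. ennreal (ws p b) * ennreal (ws p a) * indicator ?D (b, a) \<partial>count_space UNIV \<partial>count_space UNIV)"
    using nn_integral_fst_count_space[of "\<lambda>z. ennreal (ws p (fst z)) * ennreal (ws p (snd z)) * indicator ?D z"]
    by simp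
  also have "\<dots> = (\<integral>\<^sup>+ b. (ennreal (ws p b) * indicator ?DB b) * (\<integral>\<^sup>+ a. ennreal (ws p a) * indicator (?DA b) a \<partial>count_space UNIV) \<partial>count_space UNIV)"
  proof (rule nn_integral_cong)
    fix b
    have "(\<integral>\<^sup>+ a. ennreal (ws p b) * ennreal (ws p a) * indicator ?D (b, a) \<partial>count_space UNIV)
        = (\<integral>\<^sup>+ a. (ennreal (ws p b) * indicator ?DB b) * (ennreal (ws p a) * indicator (?DA b) a) \<partial>count_space UNIV)"
      by (rule nn_integral_cong) (auto simp: indicator_def)
    also have "\<dots> = (ennreal (ws p b) * indicator ?DB b) * (\<integral>\<^sup>+ a. ennreal (ws p a) * indicator (?DA b) a \<partial>count_space UNIV)"
      by (rule nn_integral_cmult) simp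
    finally show "(\<integral>\<^sup>+ a. ennreal (ws p b) * ennreal (ws p a) * indicator ?D (b, a) \<partial>count_space UNIV)
        = (ennreal (ws p b) * indicator ?DB b) * (\<integral>\<^sup>+ a. ennreal (ws p a) * indicator (?DA b) a \<partial>count_space UNIV)" .
  qed
  also have "\<dots> = (\<integral>\<^sup>+ b. ennreal (ws p b) * (\<integral>\<^sup>+ a. ennreal (ws p a) \<partial>count_space (?DA b)) \<partial>count_space ?DB)"
    by (subst (2) nn_integral_count_space_indicator) (auto simp: nn_integral_count_space_indicator intro!: nn_integral_cong simp: indicator_def)
  finally show ?thesis .
qed

end

lemma enn_final:
  fixes Ka K1 Gf G1 h :: ennreal
  assumes e1: "emeasure M E1 = Ka * Gf * h" and e2: "emeasure M E2 = Ka * G1 * h"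
    and e3: "emeasure M E3 = K1 * Gf * h" and e4: "emeasure M E4 = K1 * G1 * h"
    and p2: "measure M E2 > 0" and p4: "measure M E4 > 0"
  shows "measure M E1 / measure M E2 = measure M E3 / measure M E4"
proof -
  have m: "measure M E = enn2real (emeasure M E)" for E by (simp add: measure_def)
  have "emeasure M E1 * emeasure M E4 = emeasure M E2 * emeasure M E3"
    unfolding e1 e2 e3 e4 by (simp add: ac_simps)
  then have "enn2real (emeasure M E1 * emeasure M E4) = enn2real (emeasure M E2 * emeasure M E3)" by simp
  then have "measure M E1 * measure M E4 = measure M E2 * measure M E3"
    unfolding m by (simp add: enn2real_mult)
  then show ?thesis using p2 p4 by (simp add: frac_eq_eq)
qed

context bdc begin

lemma sum_single_m:
  assumes "\<And>b. Bset L b \<Longrightarrow> Pb b \<Longrightarrow> cnt (L, Suc L) b = m0"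
  shows "(\<integral>\<^sup>+ b. ennreal (ws p b) * (\<integral>\<^sup>+ a. ennreal (ws p a) \<partial>count_space {a. Aset L n (cnt (L, Suc L) b) a \<and> Pa a})
        \<partial>count_space {b. Bset L b \<and> Pb b})
   = (\<integral>\<^sup>+ b. ennreal (ws p b) \<partial>count_space {b. Bset L b \<and> Pb b}) *
     (\<integral>\<^sup>+ a. ennreal (ws p a) \<partial>count_space {a. Aset L n m0 a \<and> Pa a})"
proof -
  have "(\<integral>\<^sup>+ b. ennreal (ws p b) * (\<integral>\<^sup>+ a. ennreal (ws p a) \<partial>count_space {a. Aset L n (cnt (L, Suc L) b) a \<and> Pa a})
        \<partial>count_space {b. Bset L b \<and> Pb b})
      = (\<integral>\<^sup>+ b. ennreal (ws p b) * (\<integral>\<^sup>+ a. ennreal (ws p a) \<partial>count_space {a. Aset L n m0 a \<and> Pa a})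
        \<partial>count_space {b. Bset L b \<and> Pb b})"
    by (rule nn_integral_cong) (use assms in simp)
  also have "\<dots> = (\<integral>\<^sup>+ b. ennreal (ws p b) \<partial>count_space {b. Bset L b \<and> Pb b}) *
     (\<integral>\<^sup>+ a. ennreal (ws p a) \<partial>count_space {a. Aset L n m0 a \<and> Pa a})"
    by (rule nn_integral_multc) simp
  finally show ?thesis .
qed

lemma G_cw:
  assumes m: "1 \<le> m" and Qinv: "\<And>g k. Q (replicate k (Suc L, L) @ g) = Q g"
  shows "(\<integral>\<^sup>+ a. ennreal (ws p a) \<partial>count_space {a. Aset L n m a \<and> (ndf (Suc L) a \<and> Q a)})
     = ennreal ((1 - p (Suc L)) ^ (m - 1)) * (\<integral>\<^sup>+ g. ennreal (ws p g) \<partial>count_space {g. Aset L n 1 g \<and> Q g})"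
proof -
  let ?f = "\<lambda>g. replicate (m - 1) (Suc L, L) @ g"
  have bij: "bij_betw ?f {g. Aset L n 1 g \<and> Q g} {a. Aset L n m a \<and> (ndf (Suc L) a \<and> Q a)}"
    unfolding bij_betw_def
  proof
    show "inj_on ?f {g. Aset L n 1 g \<and> Q g}" by (auto simp: inj_on_def)
    show "?f ` {g. Aset L n 1 g \<and> Q g} = {a. Aset L n m a \<and> (ndf (Suc L) a \<and> Q a)}"
    proof
      show "?f ` {g. Aset L n 1 g \<and> Q g} \<subseteq> {a. Aset L n m a \<and> (ndf (Suc L) a \<and> Q a)}"
        using Aset_rep[OF _ m] Qinv by auto
      show "{a. Aset L n m a \<and> (ndf (Suc L) a \<and> Q a)} \<subseteq> ?f ` {g. Aset L n 1 g \<and> Q g}"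
      proof
        fix a assume a: "a \<in> {a. Aset L n m a \<and> (ndf (Suc L) a \<and> Q a)}"
        then obtain g where g: "a = ?f g" "Aset L n 1 g" using Aset_ndf[of L n m a] by auto
        then have "Q g" using a Qinv by auto
        then show "a \<in> ?f ` {g. Aset L n 1 g \<and> Q g}" using g by auto
      qed
    qed
  qed
  have "(\<integral>\<^sup>+ a. ennreal (ws p a) \<partial>count_space {a. Aset L n m a \<and> (ndf (Suc L) a \<and> Q a)})
      = (\<integral>\<^sup>+ g. ennreal (ws p (?f g)) \<partial>count_space {g. Aset L n 1 g \<and> Q g})"
    by (rule nn_integral_bij_count_space[OF bij, symmetric])
  also have "\<dots> = (\<integral>\<^sup>+ g. ennreal ((1 - p (Suc L)) ^ (m - 1)) * ennreal (ws p g) \<partial>count_space {g. Aset L n 1 g \<and> Q g})"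
  proof (rule nn_integral_cong)
    fix g
    have "0 \<le> (1 - p (Suc L)) ^ (m - 1)" using hp by simp
    then show "ennreal (ws p (?f g)) = ennreal ((1 - p (Suc L)) ^ (m - 1)) * ennreal (ws p g)"
      unfolding ws_rep by (simp add: ennreal_mult ws_nn)
  qed
  also have "\<dots> = ennreal ((1 - p (Suc L)) ^ (m - 1)) * (\<integral>\<^sup>+ g. ennreal (ws p g) \<partial>count_space {g. Aset L n 1 g \<and> Q g})"
    by (rule nn_integral_cmult) simp
  finally show ?thesis .
qed

lemma sum_cw:
  assumes Qinv: "\<And>g k. Q (replicate k (Suc L, L) @ g) = Q g"
  shows "(\<integral>\<^sup>+ b. ennreal (ws p b) * (\<integral>\<^sup>+ a. ennreal (ws p a) \<partial>count_space {a. Aset L n (cnt (L, Suc L) b) a \<and> (ndf (Suc L) a \<and> Q a)})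
        \<partial>count_space {b. Bset L b \<and> Pb b})
   = (\<integral>\<^sup>+ b. ennreal (ws p b) * ennreal ((1 - p (Suc L)) ^ (cnt (L, Suc L) b - 1)) \<partial>count_space {b. Bset L b \<and> Pb b}) *
     (\<integral>\<^sup>+ g. ennreal (ws p g) \<partial>count_space {g. Aset L n 1 g \<and> Q g})"
proof -
  have "(\<integral>\<^sup>+ b. ennreal (ws p b) * (\<integral>\<^sup>+ a. ennreal (ws p a) \<partial>count_space {a. Aset L n (cnt (L, Suc L) b) a \<and> (ndf (Suc L) a \<and> Q a)})
        \<partial>count_space {b. Bset L b \<and> Pb b})
    = (\<integral>\<^sup>+ b. ennreal (ws p b) * ennreal ((1 - p (Suc L)) ^ (cnt (L, Suc L) b - 1)) *
     (\<integral>\<^sup>+ g. ennreal (ws p g) \<partial>count_space {g. Aset L n 1 g \<and> Q g}) \<partial>count_space {b. Bset L b \<and> Pb b})"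
  proof (rule nn_integral_cong)
    fix b assume "b \<in> space (count_space {b. Bset L b \<and> Pb b})"
    then have "1 \<le> cnt (L, Suc L) b" using Bset_cnt by auto
    then show "ennreal (ws p b) * (\<integral>\<^sup>+ a. ennreal (ws p a) \<partial>count_space {a. Aset L n (cnt (L, Suc L) b) a \<and> (ndf (Suc L) a \<and> Q a)})
      = ennreal (ws p b) * ennreal ((1 - p (Suc L)) ^ (cnt (L, Suc L) b - 1)) *
     (\<integral>\<^sup>+ g. ennreal (ws p g) \<partial>count_space {g. Aset L n 1 g \<and> Q g})"
      using G_cw[of "cnt (L, Suc L) b" Q L n, OF _ Qinv] by (simp add: mult.assoc)
  qed
  also have "\<dots> = (\<integral>\<^sup>+ b. ennreal (ws p b) * ennreal ((1 - p (Suc L)) ^ (cnt (L, Suc L) b - 1)) \<partial>count_space {b. Bset L b \<and> Pb b}) *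
     (\<integral>\<^sup>+ g. ennreal (ws p g) \<partial>count_space {g. Aset L n 1 g \<and> Q g})"
    by (rule nn_integral_multc) simp
  finally show ?thesis .
qed

lemma ev_formula:
  assumes Ln: "L < n" and Phi: "Measurable.pred M Phi"
    and fin: "\<And>\<omega>. \<omega> \<in> space M \<Longrightarrow> Phi \<omega> \<Longrightarrow> finite {t. X t \<omega> = L \<and> X (Suc t) \<omega> = Suc L}"
    and tr: "\<And>\<rho> \<omega>. \<rho> \<in> Rst n \<Longrightarrow> \<omega> \<in> Om n \<rho> \<Longrightarrow> Phi \<omega> \<longleftrightarrow> (Pb (fb L (stp \<rho>)) \<and> Pa (fa L (stp \<rho>)))"
  shows "emeasure M {\<omega> \<in> space M. Phi \<omega>} =
    (\<integral>\<^sup>+ b. ennreal (ws p b) * (\<integral>\<^sup>+ a. ennreal (ws p a) \<partial>count_space {a. Aset L n (cnt (L, Suc L) b) a \<and> Pa a})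
        \<partial>count_space {b. Bset L b \<and> Pb b}) * hh n"
proof -
  have sp: "\<omega> \<in> space M" if "\<omega> \<in> Om n \<rho>" for \<omega> \<rho> using that by (auto simp: Om_def cyl_def)
  have "emeasure M {\<omega> \<in> space M. Phi \<omega>} =
     (\<integral>\<^sup>+ s. ennreal (ws p s) \<partial>count_space {s. Rs n s \<and> (\<lambda>s. Pb (fb L s) \<and> Pa (fa L s)) s}) * hh n"
  proof (rule emeas_event)
    show "{\<omega> \<in> space M. Phi \<omega>} \<in> sets M" using Phi by measurable
    show "\<And>\<omega>. \<omega> \<in> {\<omega> \<in> space M. Phi \<omega>} \<Longrightarrow> finite {t. X t \<omega> = L \<and> X (Suc t) \<omega> = Suc L}" using fin by auto
    show "\<And>\<rho> \<omega>. \<rho> \<in> Rst n \<Longrightarrow> \<omega> \<in> Om n \<rho> \<Longrightarrow> (\<omega> \<in> {\<omega> \<in> space M. Phi \<omega>}) = (\<lambda>s. Pb (fb L s) \<and> Pa (fa L s)) (stp \<rho>)"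
      using tr sp by auto
  qed
  also have "\<dots> = (\<integral>\<^sup>+ b. ennreal (ws p b) * (\<integral>\<^sup>+ a. ennreal (ws p a) \<partial>count_space {a. Aset L n (cnt (L, Suc L) b) a \<and> Pa a})
        \<partial>count_space {b. Bset L b \<and> Pb b}) * hh n"
    using decomp[OF Ln, of Pb Pa] by simp
  finally show ?thesis .
qed

end

lemma PsiC_Cw: "PsiC Cw x s = ndf x s" by (simp add: PsiC_def ndf_loc)

lemma fin_up: "xi_up X x \<omega> = enat m \<Longrightarrow> finite {t. X t \<omega> = x \<and> X (Suc t) \<omega> = Suc x}"
  by (auto simp: xi_up_def split: if_splits)

lemma fin_wc:
  assumes "weak_cutpoint X (Suc L) \<omega>"
  shows "finite {t. X t \<omega> = L \<and> X (Suc t) \<omega> = Suc L}"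
proof -
  obtain t0 where t0: "X t0 \<omega> = Suc L" "\<forall>i>t0. Suc L \<le> X i \<omega>" using assms by (auto simp: weak_cutpoint_def)
  have "{t. X t \<omega> = L \<and> X (Suc t) \<omega> = Suc L} \<subseteq> {..<t0}"
  proof
    fix t assume t: "t \<in> {t. X t \<omega> = L \<and> X (Suc t) \<omega> = Suc L}"
    show "t \<in> {..<t0}"
    proof (rule ccontr)
      assume "t \<notin> {..<t0}"
      then have "t0 \<le> t" by simp
      moreover have "t \<noteq> t0" using t t0 by auto
      ultimately have "t0 < t" by simp
      then show False using t t0 by fastforce
    qed
  qed
  then show ?thesis using finite_subset by blast
qed

context bdc begin

lemma tr_inC:
  assumes R: "\<rho> \<in> Rst n" and w: "\<omega> \<in> Om n \<rho>" and x: "x \<le> n"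
  shows "x \<le> L \<Longrightarrow> inC C X x \<omega> \<longleftrightarrow> PsiC C x (fb L (stp \<rho>))"
    "L < x \<Longrightarrow> inC C X x \<omega> \<longleftrightarrow> PsiC C x (fa L (stp \<rho>))"
  using Om_inC[OF R w x] PsiC_fb PsiC_fa by auto

lemma main_bdc:
  assumes C: "C \<in> {Cab a b, Cstar a, Cw}" and ik: "i \<le> k" "k < n"
    and pos1: "prob {\<omega> \<in> space M. inC C X i \<omega> \<and> inC C X k \<omega>} > 0"
    and pos2: "prob {\<omega> \<in> space M. inC C X k \<omega>} > 0"
  shows "cond_prob M (\<lambda>\<omega>. \<forall>j\<in>{k+1..n}. \<not> inC C X j \<omega>) (\<lambda>\<omega>. inC C X i \<omega> \<and> inC C X k \<omega>)
       = cond_prob M (\<lambda>\<omega>. \<forall>j\<in>{k+1..n}. \<not> inC C X j \<omega>) (\<lambda>\<omega>. inC C X k \<omega>)"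
proof (cases "i = k")
  case True then show ?thesis by simp
next
  case False
  then have ik': "i < k" using ik by simp
  let ?F = "\<lambda>\<omega>. \<forall>j\<in>{k+1..n}. \<not> inC C X j \<omega>"
  let ?A = "\<lambda>\<omega>. inC C X i \<omega>"
  let ?B = "\<lambda>\<omega>. inC C X k \<omega>"
  let ?E1 = "{\<omega> \<in> space M. ?F \<omega> \<and> (?A \<omega> \<and> ?B \<omega>)}"
  let ?E2 = "{\<omega> \<in> space M. ?A \<omega> \<and> ?B \<omega>}"
  let ?E3 = "{\<omega> \<in> space M. ?F \<omega> \<and> ?B \<omega>}"
  let ?E4 = "{\<omega> \<in> space M. ?B \<omega>}"
  have goal: "measure M ?E1 / measure M ?E2 = measure M ?E3 / measure M ?E4"
  proof (cases "C = Cw")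
    case False
    define m0 where "m0 = (case C of Cab a b \<Rightarrow> b | Cstar a \<Rightarrow> a | Cw \<Rightarrow> 0)"
    have m0: "cnt (k, Suc k) \<beta> = m0" if "PsiC C k \<beta>" for \<beta>
    proof -
      have "cnt (k, Suc k) (loc k \<beta>) = cnt (k, Suc k) \<beta>" unfolding loc_def by (rule cnt_filter) simp
      then show ?thesis using that C False by (auto simp: PsiC_def m0_def)
    qed
    have finB: "finite {t. X t \<omega> = k \<and> X (Suc t) \<omega> = Suc k}" if "?B \<omega>" for \<omega>
      using that C False by (auto intro: fin_up)
    let ?Pab = "\<lambda>\<beta>. PsiC C i \<beta> \<and> PsiC C k \<beta>"
    let ?Pb = "\<lambda>\<beta>. PsiC C k \<beta>"
    let ?Pf = "\<lambda>\<alpha>. \<forall>j\<in>{k+1..n}. \<not> PsiC C j \<alpha>"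
    let ?Pt = "\<lambda>\<alpha>::stps. True"
    let ?K = "\<lambda>Pb. (\<integral>\<^sup>+ b. ennreal (ws p b) \<partial>count_space {b. Bset k b \<and> Pb b})"
    let ?G = "\<lambda>Pa. (\<integral>\<^sup>+ a. ennreal (ws p a) \<partial>count_space {a. Aset k n m0 a \<and> Pa a})"
    have gen: "emeasure M {\<omega> \<in> space M. Phi \<omega>} = ?K Pb * ?G Pa * hh n"
      if Phi: "Measurable.pred M Phi" and fin: "\<And>\<omega>. Phi \<omega> \<Longrightarrow> ?B \<omega>"
        and tr: "\<And>\<rho> \<omega>. \<rho> \<in> Rst n \<Longrightarrow> \<omega> \<in> Om n \<rho> \<Longrightarrow> Phi \<omega> \<longleftrightarrow> (Pb (fb k (stp \<rho>)) \<and> Pa (fa k (stp \<rho>)))"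
        and PbB: "\<And>\<beta>. Pb \<beta> \<Longrightarrow> PsiC C k \<beta>"
      for Phi Pb Pa
    proof -
      have "emeasure M {\<omega> \<in> space M. Phi \<omega>} =
        (\<integral>\<^sup>+ b. ennreal (ws p b) * (\<integral>\<^sup>+ a. ennreal (ws p a) \<partial>count_space {a. Aset k n (cnt (k, Suc k) b) a \<and> Pa a})
          \<partial>count_space {b. Bset k b \<and> Pb b}) * hh n"
        by (rule ev_formula[where L=k and n=n and Phi=Phi and Pb=Pb and Pa=Pa]) (use ik Phi fin finB tr in auto)
      also have "\<dots> = ?K Pb * ?G Pa * hh n"
        by (subst sum_single_m[of k Pb m0]) (use m0 PbB in auto)
      finally show ?thesis .
    qed
    have ki: "i \<le> k" "k \<le> k" "i \<le> n" "k \<le> n" using ik by auto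
    have e1: "emeasure M ?E1 = ?K ?Pab * ?G ?Pf * hh n"
    proof (rule gen)
      show "Measurable.pred M (\<lambda>\<omega>. ?F \<omega> \<and> (?A \<omega> \<and> ?B \<omega>))" by measurable
      fix \<rho> \<omega> assume R: "\<rho> \<in> Rst n" and w: "\<omega> \<in> Om n \<rho>"
      have "?F \<omega> \<longleftrightarrow> ?Pf (fa k (stp \<rho>))" using tr_inC(2)[OF R w, of _ k C] by auto
      then show "(?F \<omega> \<and> (?A \<omega> \<and> ?B \<omega>)) \<longleftrightarrow> (?Pab (fb k (stp \<rho>)) \<and> ?Pf (fa k (stp \<rho>)))"
        using tr_inC(1)[OF R w, of i k C] tr_inC(1)[OF R w, of k k C] ki by auto
    qed auto
    have e2: "emeasure M ?E2 = ?K ?Pab * ?G ?Pt * hh n"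
    proof -
      have "emeasure M ?E2 = ?K ?Pab * ?G ?Pt * hh n"
      proof (rule gen)
        show "Measurable.pred M (\<lambda>\<omega>. ?A \<omega> \<and> ?B \<omega>)" by measurable
        fix \<rho> \<omega> assume R: "\<rho> \<in> Rst n" and w: "\<omega> \<in> Om n \<rho>"
        show "(?A \<omega> \<and> ?B \<omega>) \<longleftrightarrow> (?Pab (fb k (stp \<rho>)) \<and> ?Pt (fa k (stp \<rho>)))"
          using tr_inC(1)[OF R w, of i k C] tr_inC(1)[OF R w, of k k C] ki by auto
      qed auto
      then show ?thesis .
    qed
    have e3: "emeasure M ?E3 = ?K ?Pb * ?G ?Pf * hh n"
    proof (rule gen)
      show "Measurable.pred M (\<lambda>\<omega>. ?F \<omega> \<and> ?B \<omega>)" by measurable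
      fix \<rho> \<omega> assume R: "\<rho> \<in> Rst n" and w: "\<omega> \<in> Om n \<rho>"
      have "?F \<omega> \<longleftrightarrow> ?Pf (fa k (stp \<rho>))" using tr_inC(2)[OF R w, of _ k C] by auto
      then show "(?F \<omega> \<and> ?B \<omega>) \<longleftrightarrow> (?Pb (fb k (stp \<rho>)) \<and> ?Pf (fa k (stp \<rho>)))"
        using tr_inC(1)[OF R w, of k k C] ki by auto
    qed auto
    have e4: "emeasure M ?E4 = ?K ?Pb * ?G ?Pt * hh n"
    proof (rule gen)
      show "Measurable.pred M (\<lambda>\<omega>. ?B \<omega>)" by measurable
      fix \<rho> \<omega> assume R: "\<rho> \<in> Rst n" and w: "\<omega> \<in> Om n \<rho>"
      show "?B \<omega> \<longleftrightarrow> (?Pb (fb k (stp \<rho>)) \<and> ?Pt (fa k (stp \<rho>)))"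
        using tr_inC(1)[OF R w, of k k C] ki by auto
    qed auto
    show ?thesis by (rule enn_final[OF e1 e2 e3 e4]) (use pos1 pos2 in auto)
  next
    case True
    define L where "L = k - 1"
    have kL: "k = Suc L" using ik' by (simp add: L_def)
    have Ln: "L < n" using ik kL by simp
    have finB: "finite {t. X t \<omega> = L \<and> X (Suc t) \<omega> = Suc L}" if "?B \<omega>" for \<omega>
      using that True kL by (auto intro: fin_wc)
    let ?Pa_ = "\<lambda>\<beta>. PsiC C i \<beta>"
    let ?Pt = "\<lambda>\<beta>::stps. True"
    let ?Qf = "\<lambda>\<alpha>. \<forall>j\<in>{k+1..n}. \<not> PsiC C j \<alpha>"
    let ?K = "\<lambda>Pb. (\<integral>\<^sup>+ b. ennreal (ws p b) * ennreal ((1 - p (Suc L)) ^ (cnt (L, Suc L) b - 1)) \<partial>count_space {b. Bset L b \<and> Pb b})"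
    let ?G = "\<lambda>Q. (\<integral>\<^sup>+ g. ennreal (ws p g) \<partial>count_space {g. Aset L n 1 g \<and> Q g})"
    have gen: "emeasure M {\<omega> \<in> space M. Phi \<omega>} = ?K Pb * ?G Q * hh n"
      if Phi: "Measurable.pred M Phi" and fin: "\<And>\<omega>. Phi \<omega> \<Longrightarrow> ?B \<omega>"
        and tr: "\<And>\<rho> \<omega>. \<rho> \<in> Rst n \<Longrightarrow> \<omega> \<in> Om n \<rho> \<Longrightarrow> Phi \<omega> \<longleftrightarrow> (Pb (fb L (stp \<rho>)) \<and> (ndf (Suc L) (fa L (stp \<rho>)) \<and> Q (fa L (stp \<rho>))))"
        and Qinv: "\<And>g k. Q (replicate k (Suc L, L) @ g) = Q g"
      for Phi Pb Q
    proof -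
      have "emeasure M {\<omega> \<in> space M. Phi \<omega>} =
        (\<integral>\<^sup>+ b. ennreal (ws p b) * (\<integral>\<^sup>+ a. ennreal (ws p a) \<partial>count_space {a. Aset L n (cnt (L, Suc L) b) a \<and> (ndf (Suc L) a \<and> Q a)})
          \<partial>count_space {b. Bset L b \<and> Pb b}) * hh n"
        by (rule ev_formula[where L=L and n=n and Phi=Phi and Pb=Pb and Pa="\<lambda>a. ndf (Suc L) a \<and> Q a"]) (use Ln Phi fin finB tr in auto)
      also have "\<dots> = ?K Pb * ?G Q * hh n"
        by (subst sum_cw[OF Qinv]) simp
      finally show ?thesis .
    qed
    have qinv: "?Qf (replicate k' (Suc L, L) @ g) = ?Qf g" for k' g
      using PsiC_rep[of _ "Suc L" C k' L g] kL by auto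
    have ki: "i \<le> L" "L < k" "i \<le> n" "k \<le> n" using ik ik' kL by auto
    have trB: "?B \<omega> \<longleftrightarrow> ndf (Suc L) (fa L (stp \<rho>))" if R: "\<rho> \<in> Rst n" and w: "\<omega> \<in> Om n \<rho>" for \<rho> \<omega>
      using tr_inC(2)[OF R w, of k L C] ki True kL by (simp add: PsiC_Cw)
    have trF: "?F \<omega> \<longleftrightarrow> ?Qf (fa L (stp \<rho>))" if R: "\<rho> \<in> Rst n" and w: "\<omega> \<in> Om n \<rho>" for \<rho> \<omega>
      using tr_inC(2)[OF R w, of _ L C] ki by auto
    have trA: "?A \<omega> \<longleftrightarrow> ?Pa_ (fb L (stp \<rho>))" if R: "\<rho> \<in> Rst n" and w: "\<omega> \<in> Om n \<rho>" for \<rho> \<omega>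
      using tr_inC(1)[OF R w, of i L C] ki by auto
    have e1: "emeasure M ?E1 = ?K ?Pa_ * ?G ?Qf * hh n"
      by (rule gen) (use trA trB trF qinv in \<open>auto\<close>)
    have e2: "emeasure M ?E2 = ?K ?Pa_ * ?G ?Pt * hh n"
      by (rule gen) (use trA trB in \<open>auto\<close>)
    have e3: "emeasure M ?E3 = ?K ?Pt * ?G ?Qf * hh n"
      by (rule gen) (use trB trF qinv in \<open>auto\<close>)
    have e4: "emeasure M ?E4 = ?K ?Pt * ?G ?Pt * hh n"
      by (rule gen) (use trB in \<open>auto\<close>)
    show ?thesis by (rule enn_final[OF e1 e2 e3 e4]) (use pos1 pos2 in auto)
  qed
  then show ?thesis by (simp add: cond_prob_def)
qed

end

theorem lemma6:
  fixes M :: "'a measure" and p :: "nat \<Rightarrow> real" and X :: "nat \<Rightarrow> 'a \<Rightarrow> nat"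
    and a b i k n :: nat and C :: cset_kind
  assumes p0: "p 0 = 1"
    and p_pos: "\<And>k. 1 \<le> k \<Longrightarrow> 0 < p k \<and> p k < 1"
    and chain: "is_bd_chain M p X"
    and D1: "Dfun p 1 < \<infinity>"
    and ab: "b \<le> a" "1 \<le> b"
    and C: "C \<in> {Cab a b, Cstar a, Cw}"
    and ik: "i \<le> k" "k < n"
    and pos1: "\<P>(\<omega> in M. inC C X i \<omega> \<and> inC C X k \<omega>) > 0"
    and pos2: "\<P>(\<omega> in M. inC C X k \<omega>) > 0"
  shows "\<P>(\<omega> in M. (\<forall>j\<in>{k+1..n}. \<not> inC C X j \<omega>) \<bar> inC C X i \<omega> \<and> inC C X k \<omega>)
       = \<P>(\<omega> in M. (\<forall>j\<in>{k+1..n}. \<not> inC C X j \<omega>) \<bar> inC C X k \<omega>)"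
proof -
  interpret bdc M p X using p0 p_pos chain by unfold_locales auto
  show ?thesis using main_bdc[OF C ik pos1 pos2] by simp
qed


end
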